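(* Let $\mathcal H$ be a regular hypergraph, $L=L_K(\mathcal H)$ and $E$ its underlying graph. The category $\mathfrak M_L$ of unital right $L$-modules is equivalent to the full subcategory of the category of quiver representations of $E$ consisting of those representations $\rho$ satisfying condition (H): for every $h\in\mathcal H^1$, the linear map $[\rho(h)]:\bigoplus_{i\in I_h}\rho(s(h)_i)\to\bigoplus_{j\in J_h}\rho(r(h)_j)$, $(x_i)_{i\in I_h}\mapsto\big(\sum_{i\in I_h}\rho(h_{ij})(x_i)\big)_{j\in J_h}$, is an isomorphism. Under this equivalence a module $M$ corresponds to the representation $\rho_M(v)=Mv$, $\rho_M(e)(m)=me$.
   Context: $K$ is a field. A hypergraph $\mathcal H=(\mathcal H^0,\mathcal H^1,s,r)$: vertex set $\mathcal H^0$, hyperedge set $\mathcal H^1$, and for each $h$ nonempty index sets $I_h,J_h$ with families $s(h)=(s(h)_i)_{i\in I_h}$, $r(h)=(r(h)_j)_{j\in J_h}$ of vertices; regular means all $I_h,J_h$ finite. $L_K(\mathcal H)$ is the $K$-algebra generated by $\{v,h_{ij},h_{ij}^*\}$ ($v\in\mathcal H^0$, $h\in\mathcal H^1$, $i\in I_h$, $j\in J_h$) subject to $uv=\delta_{u,v}u$; $s(h)_ih_{ij}=h_{ij}=h_{ij}r(h)_j$, $r(h)_jh_{ij}^*=h_{ij}^*=h_{ij}^*s(h)_i$; $\sum_{j}h_{ij}h_{kj}^*=\delta_{ik}s(h)_i$; $\sum_{i}h_{ij}^*h_{ik}=\delta_{jk}r(h)_j$. The underlying graph $E$ has $E^0=\mathcal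 H^0$, $E^1=\{h_{ij}\}$, $s(h_{ij})=s(h)_i$, $r(h_{ij})=r(h)_j$. A right $L$-module $M$ is unital if $M=\sum_{v\in\mathcal H^0}Mv$. A quiver representation $\rho$ of $E$ assigns a $K$-vector space $\rho(v)$ to each vertex and a linear map $\rho(e):\rho(s(e))\to\rho(r(e))$ to each edge; morphisms are families of linear maps $\phi_v:\rho(v)\to\rho'(v)$ with $\phi_{r(e)}\circ\rho(e)=\rho'(e)\circ\phi_{s(e)}$. *)

theory Defs
  imports Complex_Main "HOL-Library.Function_Algebras" "HOL-Library.FuncSet"
begin

definition regular_hypergraph ::
  "'v set \<Rightarrow> 'h set \<Rightarrow> ('h \<Rightarrow> 'i set) \<Rightarrow> ('h \<Rightarrow> 'j set)
   \<Rightarrow> ('h \<Rightarrow> 'i \<Rightarrow> 'v) \<Rightarrow> ('h \<Rightarrow> 'j \<Rightarrow> 'v) \<Rightarrow> bool" where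
  "regular_hypergraph H0 H1 I J s r \<longleftrightarrow>
     (\<forall>h\<in>H1. I h \<noteq> {} \<and> J h \<noteq> {} \<and> finite (I h) \<and> finite (J h) \<and>
             (\<forall>i\<in>I h. s h i \<in> H0) \<and> (\<forall>j\<in>J h. r h j \<in> H0))"

definition subsp :: "('k \<Rightarrow> 'b \<Rightarrow> 'b) \<Rightarrow> 'b::ab_group_add set \<Rightarrow> bool" where
  "subsp sc S \<longleftrightarrow> 0 \<in> S \<and> (\<forall>x\<in>S. \<forall>y\<in>S. x + y \<in> S) \<and> (\<forall>c. \<forall>x\<in>S. sc c x \<in> S)"

definition lin_on :: "('k \<Rightarrow> 'b \<Rightarrow> 'b) \<Rightarrow> ('k \<Rightarrow> 'c \<Rightarrow> 'c) \<Rightarrow> 'b::ab_group_add set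
     \<Rightarrow> 'c::ab_group_add set \<Rightarrow> ('b \<Rightarrow> 'c) \<Rightarrow> bool" where
  "lin_on sc1 sc2 A B f \<longleftrightarrow> f ` A \<subseteq> B \<and>
     (\<forall>x\<in>A. \<forall>y\<in>A. f (x + y) = f x + f y) \<and> (\<forall>c. \<forall>x\<in>A. f (sc1 c x) = sc2 c (f x))"

(* A unital right L_K(H)-module, given (via the defining presentation of L_K(H)) by a
   K-vector space M and the right actions of the generators:
     P v m = m v,  A h i j m = m h_ij,  As h i j m = m h_ij^*. *)
definition unital_module ::
  "('k::field \<Rightarrow> 'm::ab_group_add \<Rightarrow> 'm) \<Rightarrow> 'v set \<Rightarrow> 'h set \<Rightarrow> ('h \<Rightarrow> 'i set) \<Rightarrow> ('h \<Rightarrow> 'j set)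
   \<Rightarrow> ('h \<Rightarrow> 'i \<Rightarrow> 'v) \<Rightarrow> ('h \<Rightarrow> 'j \<Rightarrow> 'v)
   \<Rightarrow> 'm set \<Rightarrow> ('v \<Rightarrow> 'm \<Rightarrow> 'm) \<Rightarrow> ('h \<Rightarrow> 'i \<Rightarrow> 'j \<Rightarrow> 'm \<Rightarrow> 'm) \<Rightarrow> ('h \<Rightarrow> 'i \<Rightarrow> 'j \<Rightarrow> 'm \<Rightarrow> 'm)
   \<Rightarrow> bool" where
  "unital_module sc H0 H1 I J s r M P A As \<longleftrightarrow>
     Vector_Spaces.vector_space sc \<and> subsp sc M \<and>
     (\<forall>v\<in>H0. lin_on sc sc M M (P v)) \<and>
     (\<forall>h\<in>H1. \<forall>i\<in>I h. \<forall>j\<in>J h. lin_on sc sc M M (A h i j) \<and> lin_on sc sc M M (As h i j)) \<and>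
     \<comment> \<open>u v = delta_{u,v} u\<close>
     (\<forall>u\<in>H0. \<forall>v\<in>H0. \<forall>m\<in>M. P v (P u m) = (if u = v then P u m else 0)) \<and>
     \<comment> \<open>s(h)_i h_ij = h_ij = h_ij r(h)_j and r(h)_j h_ij^* = h_ij^* = h_ij^* s(h)_i\<close>
     (\<forall>h\<in>H1. \<forall>i\<in>I h. \<forall>j\<in>J h. \<forall>m\<in>M.
        A h i j (P (s h i) m) = A h i j m \<and> P (r h j) (A h i j m) = A h i j m \<and>
        As h i j (P (r h j) m) = As h i j m \<and> P (s h i) (As h i j m) = As h i j m) \<and>
     \<comment> \<open>sum_j h_ij h_kj^* = delta_{i,k} s(h)_i\<close>
     (\<forall>h\<in>H1. \<forall>i\<in>I h. \<forall>k\<in>I h. \<forall>m\<in>M.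
        (\<Sum>j\<in>J h. As h k j (A h i j m)) = (if i = k then P (s h i) m else 0)) \<and>
     \<comment> \<open>sum_i h_ij^* h_ik = delta_{j,k} r(h)_j\<close>
     (\<forall>h\<in>H1. \<forall>j\<in>J h. \<forall>k\<in>J h. \<forall>m\<in>M.
        (\<Sum>i\<in>I h. A h i k (As h i j m)) = (if j = k then P (r h j) m else 0)) \<and>
     \<comment> \<open>unital: M = sum_v M v\<close>
     (\<forall>m\<in>M. \<exists>F g. finite F \<and> F \<subseteq> H0 \<and> (\<forall>v\<in>F. g v \<in> M) \<and> m = (\<Sum>v\<in>F. P v (g v)))"

definition Lmodule_hom ::
  "('k::field \<Rightarrow> 'm::ab_group_add \<Rightarrow> 'm) \<Rightarrow> ('k \<Rightarrow> 'n::ab_group_add \<Rightarrow> 'n)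
   \<Rightarrow> 'v set \<Rightarrow> 'h set \<Rightarrow> ('h \<Rightarrow> 'i set) \<Rightarrow> ('h \<Rightarrow> 'j set)
   \<Rightarrow> 'm set \<Rightarrow> ('v \<Rightarrow> 'm \<Rightarrow> 'm) \<Rightarrow> ('h \<Rightarrow> 'i \<Rightarrow> 'j \<Rightarrow> 'm \<Rightarrow> 'm) \<Rightarrow> ('h \<Rightarrow> 'i \<Rightarrow> 'j \<Rightarrow> 'm \<Rightarrow> 'm)
   \<Rightarrow> 'n set \<Rightarrow> ('v \<Rightarrow> 'n \<Rightarrow> 'n) \<Rightarrow> ('h \<Rightarrow> 'i \<Rightarrow> 'j \<Rightarrow> 'n \<Rightarrow> 'n) \<Rightarrow> ('h \<Rightarrow> 'i \<Rightarrow> 'j \<Rightarrow> 'n \<Rightarrow> 'n)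
   \<Rightarrow> ('m \<Rightarrow> 'n) \<Rightarrow> bool" where
  "Lmodule_hom sc1 sc2 H0 H1 I J M P A As N Q B Bs f \<longleftrightarrow>
     lin_on sc1 sc2 M N f \<and>
     (\<forall>v\<in>H0. \<forall>m\<in>M. f (P v m) = Q v (f m)) \<and>
     (\<forall>h\<in>H1. \<forall>i\<in>I h. \<forall>j\<in>J h. \<forall>m\<in>M.
        f (A h i j m) = B h i j (f m) \<and> f (As h i j m) = Bs h i j (f m))"

(* Quiver representation of the underlying graph E (edges h_ij, source s h i, range r h j):
   spaces V v and linear maps R h i j : V (s h i) \<rightarrow> V (r h j). *)
definition quiver_rep ::
  "('k::field \<Rightarrow> 'b::ab_group_add \<Rightarrow> 'b) \<Rightarrow> 'v set \<Rightarrow> 'h set \<Rightarrow> ('h \<Rightarrow> 'i set) \<Rightarrow> ('h \<Rightarrow> 'j set)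
   \<Rightarrow> ('h \<Rightarrow> 'i \<Rightarrow> 'v) \<Rightarrow> ('h \<Rightarrow> 'j \<Rightarrow> 'v) \<Rightarrow> ('v \<Rightarrow> 'b set) \<Rightarrow> ('h \<Rightarrow> 'i \<Rightarrow> 'j \<Rightarrow> 'b \<Rightarrow> 'b) \<Rightarrow> bool" where
  "quiver_rep sc H0 H1 I J s r V R \<longleftrightarrow>
     Vector_Spaces.vector_space sc \<and> (\<forall>v\<in>H0. subsp sc (V v)) \<and>
     (\<forall>h\<in>H1. \<forall>i\<in>I h. \<forall>j\<in>J h. lin_on sc sc (V (s h i)) (V (r h j)) (R h i j))"

(* Condition (H): [rho(h)] : (+)_i V(s(h)_i) \<rightarrow> (+)_j V(r(h)_j) is an isomorphism
   (it is linear by construction, so this means bijective). *)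
definition condH ::
  "'h set \<Rightarrow> ('h \<Rightarrow> 'i set) \<Rightarrow> ('h \<Rightarrow> 'j set) \<Rightarrow> ('h \<Rightarrow> 'i \<Rightarrow> 'v) \<Rightarrow> ('h \<Rightarrow> 'j \<Rightarrow> 'v)
   \<Rightarrow> ('v \<Rightarrow> 'b::ab_group_add set) \<Rightarrow> ('h \<Rightarrow> 'i \<Rightarrow> 'j \<Rightarrow> 'b \<Rightarrow> 'b) \<Rightarrow> bool" where
  "condH H1 I J s r V R \<longleftrightarrow>
     (\<forall>h\<in>H1. bij_betw (\<lambda>x. restrict (\<lambda>j. \<Sum>i\<in>I h. R h i j (x i)) (J h))
                       (PiE (I h) (\<lambda>i. V (s h i))) (PiE (J h) (\<lambda>j. V (r h j))))"

definition rep_morph ::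
  "('k::field \<Rightarrow> 'b::ab_group_add \<Rightarrow> 'b) \<Rightarrow> ('k \<Rightarrow> 'c::ab_group_add \<Rightarrow> 'c)
   \<Rightarrow> 'v set \<Rightarrow> 'h set \<Rightarrow> ('h \<Rightarrow> 'i set) \<Rightarrow> ('h \<Rightarrow> 'j set)
   \<Rightarrow> ('h \<Rightarrow> 'i \<Rightarrow> 'v) \<Rightarrow> ('h \<Rightarrow> 'j \<Rightarrow> 'v)
   \<Rightarrow> ('v \<Rightarrow> 'b set) \<Rightarrow> ('h \<Rightarrow> 'i \<Rightarrow> 'j \<Rightarrow> 'b \<Rightarrow> 'b)
   \<Rightarrow> ('v \<Rightarrow> 'c set) \<Rightarrow> ('h \<Rightarrow> 'i \<Rightarrow> 'j \<Rightarrow> 'c \<Rightarrow> 'c) \<Rightarrow> ('v \<Rightarrow> 'b \<Rightarrow> 'c) \<Rightarrow> bool" where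
  "rep_morph sc1 sc2 H0 H1 I J s r V R W S \<phi> \<longleftrightarrow>
     (\<forall>v\<in>H0. lin_on sc1 sc2 (V v) (W v) (\<phi> v)) \<and>
     (\<forall>h\<in>H1. \<forall>i\<in>I h. \<forall>j\<in>J h. \<forall>x\<in>V (s h i).
        \<phi> (r h j) (R h i j x) = S h i j (\<phi> (s h i) x))"

definition reps_isomorphic ::
  "('k::field \<Rightarrow> 'b::ab_group_add \<Rightarrow> 'b) \<Rightarrow> ('k \<Rightarrow> 'c::ab_group_add \<Rightarrow> 'c)
   \<Rightarrow> 'v set \<Rightarrow> 'h set \<Rightarrow> ('h \<Rightarrow> 'i set) \<Rightarrow> ('h \<Rightarrow> 'j set)
   \<Rightarrow> ('h \<Rightarrow> 'i \<Rightarrow> 'v) \<Rightarrow> ('h \<Rightarrow> 'j \<Rightarrow> 'v)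
   \<Rightarrow> ('v \<Rightarrow> 'b set) \<Rightarrow> ('h \<Rightarrow> 'i \<Rightarrow> 'j \<Rightarrow> 'b \<Rightarrow> 'b)
   \<Rightarrow> ('v \<Rightarrow> 'c set) \<Rightarrow> ('h \<Rightarrow> 'i \<Rightarrow> 'j \<Rightarrow> 'c \<Rightarrow> 'c) \<Rightarrow> bool" where
  "reps_isomorphic sc1 sc2 H0 H1 I J s r V R W S \<longleftrightarrow>
     (\<exists>\<phi> \<psi>. rep_morph sc1 sc2 H0 H1 I J s r V R W S \<phi> \<and>
            rep_morph sc2 sc1 H0 H1 I J s r W S V R \<psi> \<and>
            (\<forall>v\<in>H0. (\<forall>x\<in>V v. \<psi> v (\<phi> v x) = x) \<and> (\<forall>y\<in>W v. \<phi> v (\<psi> v y) = y)))"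

end

theory Submission
  imports Defs
begin

lemma sum_fun_app: "(sum f A) x = (\<Sum>a\<in>A. f a x)"
  for f :: "'a \<Rightarrow> 'v \<Rightarrow> 'b::comm_monoid_add"
  by (induct A rule: infinite_finite_induct) auto

lemma subsp_sum: "subsp sc S \<Longrightarrow> (\<forall>k\<in>F. g k \<in> S) \<Longrightarrow> sum g F \<in> S"
  by (induct F rule: infinite_finite_induct) (auto simp: subsp_def)

lemma lin_on_zero: "lin_on sc1 sc2 S T f \<Longrightarrow> 0 \<in> S \<Longrightarrow> f 0 = 0"
  unfolding lin_on_def by (metis add.right_neutral add_left_imp_eq)

lemma lin_on_sum:
  assumes "lin_on sc1 sc2 S T f" "subsp sc1 S" "\<forall>k\<in>F. g k \<in> S"
  shows "f (sum g F) = (\<Sum>k\<in>F. f (g k))"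
  using assms(3)
proof (induct F rule: infinite_finite_induct)
  case (infinite A) then show ?case using lin_on_zero[OF assms(1)] assms(2) by (simp add: subsp_def)
next
  case empty then show ?case using lin_on_zero[OF assms(1)] assms(2) by (simp add: subsp_def)
next
  case (insert x F)
  have "sum g F \<in> S" using subsp_sum[OF assms(2)] insert by auto
  then show ?case using insert assms(1) unfolding lin_on_def by auto
qed

lemma lin_on_mono: "lin_on sc1 sc2 S T f \<Longrightarrow> S' \<subseteq> S \<Longrightarrow> f ` S' \<subseteq> T' \<Longrightarrow> lin_on sc1 sc2 S' T' f"
  unfolding lin_on_def by (meson subsetD)

locale umod =
  fixes sc :: "'k::field \<Rightarrow> 'm::ab_group_add \<Rightarrow> 'm"
    and H0 :: "'v set" and H1 :: "'h set" and I :: "'h \<Rightarrow> 'i set" and J :: "'h \<Rightarrow> 'j set"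
    and s :: "'h \<Rightarrow> 'i \<Rightarrow> 'v" and r :: "'h \<Rightarrow> 'j \<Rightarrow> 'v"
    and M P A As
  assumes um: "unital_module sc H0 H1 I J s r M P A As"
    and reg: "regular_hypergraph H0 H1 I J s r"
begin

lemma vs: "Vector_Spaces.vector_space sc" and sub: "subsp sc M"
  and P_lin: "v \<in> H0 \<Longrightarrow> lin_on sc sc M M (P v)"
  and A_lin: "h \<in> H1 \<Longrightarrow> i \<in> I h \<Longrightarrow> j \<in> J h \<Longrightarrow> lin_on sc sc M M (A h i j)"
  and As_lin: "h \<in> H1 \<Longrightarrow> i \<in> I h \<Longrightarrow> j \<in> J h \<Longrightarrow> lin_on sc sc M M (As h i j)"
  and PP: "u \<in> H0 \<Longrightarrow> v \<in> H0 \<Longrightarrow> m \<in> M \<Longrightarrow> P v (P u m) = (if u = v then P u m else 0)"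
  and AP: "h \<in> H1 \<Longrightarrow> i \<in> I h \<Longrightarrow> j \<in> J h \<Longrightarrow> m \<in> M \<Longrightarrow> A h i j (P (s h i) m) = A h i j m"
  and PA: "h \<in> H1 \<Longrightarrow> i \<in> I h \<Longrightarrow> j \<in> J h \<Longrightarrow> m \<in> M \<Longrightarrow> P (r h j) (A h i j m) = A h i j m"
  and AsP: "h \<in> H1 \<Longrightarrow> i \<in> I h \<Longrightarrow> j \<in> J h \<Longrightarrow> m \<in> M \<Longrightarrow> As h i j (P (r h j) m) = As h i j m"
  and PAs: "h \<in> H1 \<Longrightarrow> i \<in> I h \<Longrightarrow> j \<in> J h \<Longrightarrow> m \<in> M \<Longrightarrow> P (s h i) (As h i j m) = As h i j m"
  and sumAsA: "h \<in> H1 \<Longrightarrow> i \<in> I h \<Longrightarrow> k \<in> I h \<Longrightarrow> m \<in> M \<Longrightarrow>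
        (\<Sum>j\<in>J h. As h k j (A h i j m)) = (if i = k then P (s h i) m else 0)"
  and sumAAs: "h \<in> H1 \<Longrightarrow> j \<in> J h \<Longrightarrow> l \<in> J h \<Longrightarrow> m \<in> M \<Longrightarrow>
        (\<Sum>i\<in>I h. A h i l (As h i j m)) = (if j = l then P (r h j) m else 0)"
  and unital: "m \<in> M \<Longrightarrow> \<exists>F g. finite F \<and> F \<subseteq> H0 \<and> (\<forall>v\<in>F. g v \<in> M) \<and> m = (\<Sum>v\<in>F. P v (g v))"
  using um unfolding unital_module_def by (simp_all add: Ball_def)

lemma finI: "h \<in> H1 \<Longrightarrow> finite (I h)" and finJ: "h \<in> H1 \<Longrightarrow> finite (J h)"
  and sH0: "h \<in> H1 \<Longrightarrow> i \<in> I h \<Longrightarrow> s h i \<in> H0" and rH0: "h \<in> H1 \<Longrightarrow> j \<in> J h \<Longrightarrow> r h j \<in> H0"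
  using reg unfolding regular_hypergraph_def by blast+

lemma zeroM: "0 \<in> M" and addM: "x \<in> M \<Longrightarrow> y \<in> M \<Longrightarrow> x + y \<in> M" and scM: "x \<in> M \<Longrightarrow> sc c x \<in> M"
  using sub unfolding subsp_def by blast+

lemma P_M: "v \<in> H0 \<Longrightarrow> m \<in> M \<Longrightarrow> P v m \<in> M"
  and P_add: "v \<in> H0 \<Longrightarrow> x \<in> M \<Longrightarrow> y \<in> M \<Longrightarrow> P v (x + y) = P v x + P v y"
  and P_sc: "v \<in> H0 \<Longrightarrow> x \<in> M \<Longrightarrow> P v (sc c x) = sc c (P v x)"
  using P_lin unfolding lin_on_def by blast+

lemma A_M: "h \<in> H1 \<Longrightarrow> i \<in> I h \<Longrightarrow> j \<in> J h \<Longrightarrow> m \<in> M \<Longrightarrow> A h i j m \<in> M"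
  and A_add: "h \<in> H1 \<Longrightarrow> i \<in> I h \<Longrightarrow> j \<in> J h \<Longrightarrow> x \<in> M \<Longrightarrow> y \<in> M \<Longrightarrow> A h i j (x + y) = A h i j x + A h i j y"
  and A_sc: "h \<in> H1 \<Longrightarrow> i \<in> I h \<Longrightarrow> j \<in> J h \<Longrightarrow> x \<in> M \<Longrightarrow> A h i j (sc c x) = sc c (A h i j x)"
  using A_lin unfolding lin_on_def by blast+

lemma As_M: "h \<in> H1 \<Longrightarrow> i \<in> I h \<Longrightarrow> j \<in> J h \<Longrightarrow> m \<in> M \<Longrightarrow> As h i j m \<in> M"
  and As_add: "h \<in> H1 \<Longrightarrow> i \<in> I h \<Longrightarrow> j \<in> J h \<Longrightarrow> x \<in> M \<Longrightarrow> y \<in> M \<Longrightarrow> As h i j (x + y) = As h i j x + As h i j y"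
  and As_sc: "h \<in> H1 \<Longrightarrow> i \<in> I h \<Longrightarrow> j \<in> J h \<Longrightarrow> x \<in> M \<Longrightarrow> As h i j (sc c x) = sc c (As h i j x)"
  using As_lin unfolding lin_on_def by blast+

lemma P_0: "v \<in> H0 \<Longrightarrow> P v 0 = 0"
  using lin_on_zero[OF P_lin] zeroM by blast

lemma P_sum: "v \<in> H0 \<Longrightarrow> \<forall>k\<in>F. g k \<in> M \<Longrightarrow> P v (sum g F) = (\<Sum>k\<in>F. P v (g k))"
  using lin_on_sum[OF P_lin sub] by blast

lemma A_sum: "h \<in> H1 \<Longrightarrow> i \<in> I h \<Longrightarrow> j \<in> J h \<Longrightarrow> \<forall>k\<in>F. g k \<in> M \<Longrightarrow> A h i j (sum g F) = (\<Sum>k\<in>F. A h i j (g k))"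
  using lin_on_sum[OF A_lin sub] by blast

lemma As_sum: "h \<in> H1 \<Longrightarrow> i \<in> I h \<Longrightarrow> j \<in> J h \<Longrightarrow> \<forall>k\<in>F. g k \<in> M \<Longrightarrow> As h i j (sum g F) = (\<Sum>k\<in>F. As h i j (g k))"
  using lin_on_sum[OF As_lin sub] by blast

lemma sumM: "\<forall>k\<in>F. g k \<in> M \<Longrightarrow> sum g F \<in> M"
  using subsp_sum[OF sub] by blast

lemma idem: "v \<in> H0 \<Longrightarrow> x \<in> P v ` M \<Longrightarrow> P v x = x"
  using PP by auto

lemma img_M: "v \<in> H0 \<Longrightarrow> x \<in> P v ` M \<Longrightarrow> x \<in> M"
  using P_M by auto

lemma subsp_img: "v \<in> H0 \<Longrightarrow> subsp sc (P v ` M)"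
  unfolding subsp_def
proof (intro conjI ballI allI)
  assume v: "v \<in> H0"
  show "0 \<in> P v ` M" using P_0[OF v] zeroM by force
  fix x y assume "x \<in> P v ` M" "y \<in> P v ` M"
  then obtain a b where "a \<in> M" "b \<in> M" "x = P v a" "y = P v b" by auto
  then show "x + y \<in> P v ` M" using P_add[OF v] addM by (metis image_eqI)
next
  fix c x assume v: "v \<in> H0" and "x \<in> P v ` M"
  then obtain a where "a \<in> M" "x = P v a" by auto
  then show "sc c x \<in> P v ` M" using P_sc[OF v] scM by (metis image_eqI)
qed

definition supp where "supp m = {v\<in>H0. P v m \<noteq> 0}"

lemma supp_fin: assumes m: "m \<in> M" shows "finite (supp m)" and "m = (\<Sum>v\<in>supp m. P v m)"
proof -
  obtain F g where F: "finite F" "F \<subseteq> H0" "\<forall>v\<in>F. g v \<in> M" "m = (\<Sum>v\<in>F. P v (g v))"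
    using unital[OF m] by blast
  have Pu: "P u m = (if u \<in> F then P u (g u) else 0)" if u: "u \<in> H0" for u
  proof -
    have "P u m = (\<Sum>v\<in>F. P u (P v (g v)))" using F(2,3) P_M unfolding F(4) by (intro P_sum[OF u]) (auto simp: subset_iff)
    also have "\<dots> = (\<Sum>v\<in>F. if v = u then P v (g v) else 0)"
      using F PP u by (intro sum.cong) (auto simp: subset_iff)
    also have "\<dots> = (if u \<in> F then P u (g u) else 0)"
      using F by (simp add: sum.delta')
    finally show ?thesis .
  qed
  have sF: "supp m \<subseteq> F" using Pu unfolding supp_def by (auto split: if_splits)
  then show "finite (supp m)" using F finite_subset by blast
  have "m = (\<Sum>v\<in>F. P v m)" using F Pu by (auto intro!: sum.cong simp: subset_iff)
  also have "\<dots> = (\<Sum>v\<in>supp m. P v m)"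
    using F sF by (intro sum.mono_neutral_right) (auto simp: supp_def)
  finally show "m = (\<Sum>v\<in>supp m. P v m)" .
qed

lemma A_img: assumes h: "h \<in> H1" and i: "i \<in> I h" and j: "j \<in> J h" and a: "a \<in> P (s h i) ` M"
  shows "A h i j a \<in> P (r h j) ` M"
proof -
  obtain m where m: "m \<in> M" "a = P (s h i) m" using a by auto
  have "A h i j a = P (r h j) (A h i j m)" using m AP[OF h i j] PA[OF h i j] by simp
  then show ?thesis using A_M[OF h i j m(1)] by blast
qed

lemma As_img: assumes h: "h \<in> H1" and i: "i \<in> I h" and j: "j \<in> J h" and a: "a \<in> P (r h j) ` M"
  shows "As h i j a \<in> P (s h i) ` M"
proof -
  obtain m where m: "m \<in> M" "a = P (r h j) m" using a by auto
  have "As h i j a = P (s h i) (As h i j m)" using m AsP[OF h i j] PAs[OF h i j] by simp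
  then show ?thesis using As_M[OF h i j m(1)] by blast
qed

lemma quiv: "quiver_rep sc H0 H1 I J s r (\<lambda>v. P v ` M) A"
  unfolding quiver_rep_def
proof (intro conjI vs ballI subsp_img)
  fix h i j assume h: "h \<in> H1" and i: "i \<in> I h" and j: "j \<in> J h"
  show "lin_on sc sc (P (s h i) ` M) (P (r h j) ` M) (A h i j)"
  proof (rule lin_on_mono[OF A_lin[OF h i j]])
    show "P (s h i) ` M \<subseteq> M" using P_M sH0[OF h i] by auto
    show "A h i j ` P (s h i) ` M \<subseteq> P (r h j) ` M"
      using A_img[OF h i j] by blast
  qed
qed

lemma condH: "condH H1 I J s r (\<lambda>v. P v ` M) A"
  unfolding condH_def
proof
  fix h assume h: "h \<in> H1"
  let ?f = "\<lambda>x. restrict (\<lambda>j. \<Sum>i\<in>I h. A h i j (x i)) (J h)"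
  let ?g = "\<lambda>y. restrict (\<lambda>i. \<Sum>j\<in>J h. As h i j (y j)) (I h)"
  let ?X = "PiE (I h) (\<lambda>i. P (s h i) ` M)" and ?Y = "PiE (J h) (\<lambda>j. P (r h j) ` M)"
  have Ain: "A h i j a \<in> P (r h j) ` M" if "i \<in> I h" "j \<in> J h" "a \<in> P (s h i) ` M" for i j a
    using A_img[OF h that] .
  have Asin: "As h i j a \<in> P (s h i) ` M" if "i \<in> I h" "j \<in> J h" "a \<in> P (r h j) ` M" for i j a
    using As_img[OF h that] .
  show "bij_betw ?f ?X ?Y"
  proof (rule bij_betw_byWitness[where f' = ?g])
    have fmem: "?f x \<in> ?Y" if x: "x \<in> ?X" for x
    proof -
      have "(\<Sum>i\<in>I h. A h i j (x i)) \<in> P (r h j) ` M" if j: "j \<in> J h" for j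
        by (rule subsp_sum[OF subsp_img[OF rH0[OF h j]]]) (use x j Ain in \<open>auto simp: PiE_iff\<close>)
      then show "?f x \<in> ?Y" by (simp add: PiE_iff)
    qed
    have gmem: "?g y \<in> ?X" if y: "y \<in> ?Y" for y
    proof -
      have "(\<Sum>j\<in>J h. As h i j (y j)) \<in> P (s h i) ` M" if i: "i \<in> I h" for i
        by (rule subsp_sum[OF subsp_img[OF sH0[OF h i]]]) (use y i Asin in \<open>auto simp: PiE_iff\<close>)
      then show "?g y \<in> ?X" by (simp add: PiE_iff)
    qed
    show "?f ` ?X \<subseteq> ?Y" using fmem by blast
    show "?g ` ?Y \<subseteq> ?X" using gmem by blast
    show "\<forall>x\<in>?X. ?g (?f x) = x"
    proof
      fix x assume x: "x \<in> ?X"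
      have xM: "x k \<in> M" if "k \<in> I h" for k using x that img_M[OF sH0[OF h that]] by auto
      show "?g (?f x) = x"
      proof (rule PiE_ext[OF _ x])
        show "?g (?f x) \<in> ?X" by (rule gmem[OF fmem[OF x]])
        fix i assume i: "i \<in> I h"
        have "?g (?f x) i = (\<Sum>j\<in>J h. As h i j (\<Sum>k\<in>I h. A h k j (x k)))" using i by simp
        also have "\<dots> = (\<Sum>j\<in>J h. \<Sum>k\<in>I h. As h i j (A h k j (x k)))"
          using i xM A_M[OF h] by (intro sum.cong[OF refl] As_sum[OF h i]) auto
        also have "\<dots> = (\<Sum>k\<in>I h. \<Sum>j\<in>J h. As h i j (A h k j (x k)))" by (rule sum.swap)
        also have "\<dots> = (\<Sum>k\<in>I h. if k = i then P (s h k) (x k) else 0)"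
          by (rule sum.cong[OF refl], rule sumAsA[OF h], assumption, rule i, rule xM, assumption)
        also have "\<dots> = P (s h i) (x i)" using i finI[OF h] by simp
        also have "\<dots> = x i" using x i by (intro idem[OF sH0[OF h i]]) (simp add: PiE_iff)
        finally show "?g (?f x) i = x i" .
      qed
    qed
    show "\<forall>y\<in>?Y. ?f (?g y) = y"
    proof
      fix y assume y: "y \<in> ?Y"
      have yM: "y k \<in> M" if "k \<in> J h" for k using y that img_M[OF rH0[OF h that]] by auto
      show "?f (?g y) = y"
      proof (rule PiE_ext[OF _ y])
        show "?f (?g y) \<in> ?Y" by (rule fmem[OF gmem[OF y]])
        fix j assume j: "j \<in> J h"
        have "?f (?g y) j = (\<Sum>i\<in>I h. A h i j (\<Sum>k\<in>J h. As h i k (y k)))" using j by simp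
        also have "\<dots> = (\<Sum>i\<in>I h. \<Sum>k\<in>J h. A h i j (As h i k (y k)))"
          using j yM As_M[OF h] by (intro sum.cong[OF refl] A_sum[OF h _ j]) auto
        also have "\<dots> = (\<Sum>k\<in>J h. \<Sum>i\<in>I h. A h i j (As h i k (y k)))" by (rule sum.swap)
        also have "\<dots> = (\<Sum>k\<in>J h. if k = j then P (r h k) (y k) else 0)"
          by (rule sum.cong[OF refl], rule sumAAs[OF h], assumption, rule j, rule yM, assumption)
        also have "\<dots> = P (r h j) (y j)" using j finJ[OF h] by simp
        also have "\<dots> = y j" using y j by (intro idem[OF rH0[OF h j]]) (simp add: PiE_iff)
        finally show "?f (?g y) j = y j" .
      qed
    qed
  qed
qed

lemma supp_sub: "m \<in> M \<Longrightarrow> finite G \<Longrightarrow> G \<subseteq> H0 \<Longrightarrow> supp m \<subseteq> G \<Longrightarrow> m = (\<Sum>v\<in>G. P v m)"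
proof -
  assume m: "m \<in> M" and G: "finite G" "G \<subseteq> H0" "supp m \<subseteq> G"
  have "m = (\<Sum>v\<in>supp m. P v m)" using supp_fin[OF m] by simp
  also have "\<dots> = (\<Sum>v\<in>G. P v m)"
    using G by (intro sum.mono_neutral_left) (auto simp: supp_def)
  finally show ?thesis .
qed

lemma sc_sum: "sc c (sum g F) = (\<Sum>x\<in>F. sc c (g x))"
proof -
  interpret vector_space sc by (rule vs)
  show ?thesis by (rule scale_sum_right)
qed

lemma sc_zero: "sc c 0 = 0"
proof -
  interpret vector_space sc by (rule vs)
  show ?thesis by (rule scale_zero_right)
qed

lemma PP_img: "u \<in> H0 \<Longrightarrow> v \<in> H0 \<Longrightarrow> y \<in> P u ` M \<Longrightarrow> P v y = (if u = v then y else 0)"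
  using PP by auto

lemma A_delta: assumes h: "h \<in> H1" and i: "i \<in> I h" and j: "j \<in> J h" and u: "u \<in> H0" and y: "y \<in> P u ` M"
  shows "A h i j y = (if u = s h i then A h i j y else 0)"
proof -
  have yM: "y \<in> M" using img_M[OF u y] .
  have "A h i j y = A h i j (P (s h i) y)" using AP[OF h i j yM] by simp
  also have "\<dots> = (if u = s h i then A h i j y else A h i j 0)"
    using PP_img[OF u sH0[OF h i] y] by simp
  also have "A h i j 0 = 0" using lin_on_zero[OF A_lin[OF h i j] zeroM] .
  finally show ?thesis by simp
qed

lemma As_delta: assumes h: "h \<in> H1" and i: "i \<in> I h" and j: "j \<in> J h" and u: "u \<in> H0" and y: "y \<in> P u ` M"
  shows "As h i j y = (if u = r h j then As h i j y else 0)"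
proof -
  have yM: "y \<in> M" using img_M[OF u y] .
  have "As h i j y = As h i j (P (r h j) y)" using AsP[OF h i j yM] by simp
  also have "\<dots> = (if u = r h j then As h i j y else As h i j 0)"
    using PP_img[OF u rH0[OF h j] y] by simp
  also have "As h i j 0 = 0" using lin_on_zero[OF As_lin[OF h i j] zeroM] .
  finally show ?thesis by simp
qed

lemma supp_add: "x \<in> M \<Longrightarrow> y \<in> M \<Longrightarrow> supp (x + y) \<subseteq> supp x \<union> supp y"
  unfolding supp_def using P_add by auto

lemma supp_sc: "x \<in> M \<Longrightarrow> supp (sc c x) \<subseteq> supp x"
  unfolding supp_def using P_sc sc_zero by auto

lemma supp_P: "v \<in> H0 \<Longrightarrow> m \<in> M \<Longrightarrow> supp (P v m) \<subseteq> {v}"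
  unfolding supp_def using PP by (auto split: if_splits)

lemma supp_img: "v \<in> H0 \<Longrightarrow> y \<in> P v ` M \<Longrightarrow> supp y \<subseteq> {v}"
  using supp_P by auto

lemma supp_H0: "supp m \<subseteq> H0" unfolding supp_def by auto

lemma A_0: "h \<in> H1 \<Longrightarrow> i \<in> I h \<Longrightarrow> j \<in> J h \<Longrightarrow> A h i j 0 = 0"
  using lin_on_zero[OF A_lin zeroM] .

lemma As_0: "h \<in> H1 \<Longrightarrow> i \<in> I h \<Longrightarrow> j \<in> J h \<Longrightarrow> As h i j 0 = 0"
  using lin_on_zero[OF As_lin zeroM] .

lemma A_img': "h \<in> H1 \<Longrightarrow> i \<in> I h \<Longrightarrow> j \<in> J h \<Longrightarrow> m \<in> M \<Longrightarrow> A h i j m \<in> P (r h j) ` M"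
proof -
  assume a: "h \<in> H1" "i \<in> I h" "j \<in> J h" "m \<in> M"
  have "A h i j (P (s h i) m) \<in> P (r h j) ` M" using A_img[OF a(1-3)] a(4) by blast
  then show ?thesis using AP[OF a] by simp
qed

lemma As_img': "h \<in> H1 \<Longrightarrow> i \<in> I h \<Longrightarrow> j \<in> J h \<Longrightarrow> m \<in> M \<Longrightarrow> As h i j m \<in> P (s h i) ` M"
proof -
  assume a: "h \<in> H1" "i \<in> I h" "j \<in> J h" "m \<in> M"
  have "As h i j (P (r h j) m) \<in> P (s h i) ` M" using As_img[OF a(1-3)] a(4) by blast
  then show ?thesis using AsP[OF a] by simp
qed

end

lemma part2:
  assumes reg: "regular_hypergraph H0 H1 I J s r"
    and uM: "unital_module scM H0 H1 I J s r M P A As"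
    and uN: "unital_module scN H0 H1 I J s r N Q B Bs"
    and hom: "Lmodule_hom scM scN H0 H1 I J M P A As N Q B Bs f"
  shows "rep_morph scM scN H0 H1 I J s r (\<lambda>v. P v ` M) A (\<lambda>v. Q v ` N) B (\<lambda>v. f)"
proof -
  interpret M: umod scM H0 H1 I J s r M P A As using uM reg by unfold_locales
  interpret N: umod scN H0 H1 I J s r N Q B Bs using uN reg by unfold_locales
  have lin: "lin_on scM scN M N f"
    and fP: "\<And>v m. v \<in> H0 \<Longrightarrow> m \<in> M \<Longrightarrow> f (P v m) = Q v (f m)"
    and fA: "\<And>h i j m. h \<in> H1 \<Longrightarrow> i \<in> I h \<Longrightarrow> j \<in> J h \<Longrightarrow> m \<in> M \<Longrightarrow> f (A h i j m) = B h i j (f m)"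
    using hom unfolding Lmodule_hom_def by auto
  have fM: "m \<in> M \<Longrightarrow> f m \<in> N" for m using lin unfolding lin_on_def by auto
  show ?thesis unfolding rep_morph_def
  proof (intro conjI ballI)
    fix v assume v: "v \<in> H0"
    show "lin_on scM scN (P v ` M) (Q v ` N) f"
    proof (rule lin_on_mono[OF lin])
      show "P v ` M \<subseteq> M" using M.img_M[OF v] by blast
      show "f ` P v ` M \<subseteq> Q v ` N" using fP[OF v] fM by auto
    qed
  next
    fix h i j x assume h: "h \<in> H1" and i: "i \<in> I h" and j: "j \<in> J h" and x: "x \<in> P (s h i) ` M"
    show "f (A h i j x) = B h i j (f x)" using fA[OF h i j M.img_M[OF M.sH0[OF h i] x]] .
  qed
qed

lemma part3:
  assumes reg: "regular_hypergraph H0 H1 I J s r"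
    and uM: "unital_module scM H0 H1 I J s r M P A As"
    and uN: "unital_module scN H0 H1 I J s r N Q B Bs"
    and homf: "Lmodule_hom scM scN H0 H1 I J M P A As N Q B Bs f"
    and homg: "Lmodule_hom scM scN H0 H1 I J M P A As N Q B Bs g"
    and eq: "\<forall>v\<in>H0. \<forall>x\<in>P v ` M. f x = g x"
  shows "\<forall>x\<in>M. f x = g x"
proof
  interpret M: umod scM H0 H1 I J s r M P A As using uM reg by unfold_locales
  fix m assume m: "m \<in> M"
  have linf: "lin_on scM scN M N f" using homf unfolding Lmodule_hom_def by auto
  have ling: "lin_on scM scN M N g" using homg unfolding Lmodule_hom_def by auto
  have PM: "\<forall>v\<in>M.supp m. P v m \<in> M" using M.P_M m M.supp_H0 by auto
  have "f m = f (\<Sum>v\<in>M.supp m. P v m)" using M.supp_fin(2)[OF m] by simp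
  also have "\<dots> = (\<Sum>v\<in>M.supp m. f (P v m))" by (rule lin_on_sum[OF linf M.sub PM])
  also have "\<dots> = (\<Sum>v\<in>M.supp m. g (P v m))"
    using eq m M.supp_H0 by (intro sum.cong refl) auto
  also have "\<dots> = g (\<Sum>v\<in>M.supp m. P v m)" by (rule lin_on_sum[OF ling M.sub PM, symmetric])
  also have "\<dots> = g m" using M.supp_fin(2)[OF m] by simp
  finally show "f m = g m" .
qed

lemma part4:
  fixes scN :: "'k::field \<Rightarrow> 'n::ab_group_add \<Rightarrow> 'n"
  assumes reg: "regular_hypergraph H0 H1 I J s r"
    and uM: "unital_module scM H0 H1 I J s r M P A As"
    and uN: "unital_module scN H0 H1 I J s r N Q B Bs"
    and rm: "rep_morph scM scN H0 H1 I J s r (\<lambda>v. P v ` M) A (\<lambda>v. Q v ` N) B \<phi>"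
  shows "\<exists>f. Lmodule_hom scM scN H0 H1 I J M P A As N Q B Bs f \<and>
             (\<forall>v\<in>H0. \<forall>x\<in>P v ` M. f x = \<phi> v x)"
proof -
  interpret M: umod scM H0 H1 I J s r M P A As using uM reg by unfold_locales
  interpret N: umod scN H0 H1 I J s r N Q B Bs using uN reg by unfold_locales
  have \<phi>lin: "lin_on scM scN (P v ` M) (Q v ` N) (\<phi> v)" if "v \<in> H0" for v
    using rm that unfolding rep_morph_def by blast
  have \<phi>A: "\<phi> (r h j) (A h i j x) = B h i j (\<phi> (s h i) x)"
    if "h \<in> H1" "i \<in> I h" "j \<in> J h" "x \<in> P (s h i) ` M" for h i j x
    using rm that unfolding rep_morph_def by blast
  have \<phi>mem: "\<phi> v x \<in> Q v ` N" if "v \<in> H0" "x \<in> P v ` M" for v x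
    using \<phi>lin[OF that(1)] that(2) unfolding lin_on_def by blast
  have \<phi>add: "\<phi> v (x + y) = \<phi> v x + \<phi> v y" if "v \<in> H0" "x \<in> P v ` M" "y \<in> P v ` M" for v x y
    using \<phi>lin[OF that(1)] that(2,3) unfolding lin_on_def by blast
  have \<phi>sc: "\<phi> v (scM c x) = scN c (\<phi> v x)" if "v \<in> H0" "x \<in> P v ` M" for v x c
    using \<phi>lin[OF that(1)] that(2) unfolding lin_on_def by blast
  have zimg: "0 \<in> P v ` M" if "v \<in> H0" for v
    using M.subsp_img[OF that] unfolding subsp_def by blast
  have \<phi>0: "\<phi> v 0 = 0" if "v \<in> H0" for v
    by (rule lin_on_zero[OF \<phi>lin[OF that] zimg[OF that]])
  have Pimg: "P v m \<in> P v ` M" if "m \<in> M" for v m using that by blast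
  define f where "f m = (\<Sum>v\<in>M.supp m. \<phi> v (P v m))" for m
  have fG: "f m = (\<Sum>v\<in>G. \<phi> v (P v m))"
    if m: "m \<in> M" and G: "finite G" "G \<subseteq> H0" "M.supp m \<subseteq> G" for m G
    unfolding f_def
  proof (rule sum.mono_neutral_left[OF G(1) G(3)])
    show "\<forall>i\<in>G - M.supp m. \<phi> i (P i m) = 0"
    proof
      fix v assume "v \<in> G - M.supp m"
      then have v: "v \<in> H0" and "P v m = 0" using G unfolding M.supp_def by auto
      then show "\<phi> v (P v m) = 0" using \<phi>0[OF v] by simp
    qed
  qed
  have fimg: "f x = \<phi> v x" if v: "v \<in> H0" and x: "x \<in> P v ` M" for v x
  proof -
    have xM: "x \<in> M" using M.img_M[OF v x] .
    have "f x = (\<Sum>u\<in>{v}. \<phi> u (P u x))"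
      using M.supp_img[OF v x] v by (intro fG[OF xM]) auto
    also have "\<dots> = \<phi> v x" using M.idem[OF v x] by simp
    finally show ?thesis .
  qed
  have fN: "f m \<in> N" if m: "m \<in> M" for m
    unfolding f_def
  proof (rule N.sumM, rule ballI)
    fix v assume "v \<in> M.supp m"
    then have v: "v \<in> H0" using M.supp_H0 by blast
    show "\<phi> v (P v m) \<in> N" using N.img_M[OF v \<phi>mem[OF v Pimg[OF m]]] .
  qed
  have finsupp: "finite (M.supp m)" if "m \<in> M" for m using M.supp_fin(1)[OF that] .
  have fmem: "\<forall>u\<in>G. \<phi> u (P u m) \<in> N" if "m \<in> M" "G \<subseteq> H0" for m G
  proof
    fix u assume "u \<in> G"
    then have u: "u \<in> H0" using that(2) by blast
    show "\<phi> u (P u m) \<in> N" by (rule N.img_M[OF u \<phi>mem[OF u Pimg[OF that(1)]]])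
  qed
  have fdelta: "(\<Sum>u\<in>G. F (\<phi> u (P u m))) = F (\<phi> w (P w m))"
    if m: "m \<in> M" and G: "finite G" "G \<subseteq> H0" "w \<in> G"
      and F: "\<And>u. u \<in> H0 \<Longrightarrow> F (\<phi> u (P u m)) = (if u = w then F (\<phi> u (P u m)) else 0)"
    for m G w and F :: "'n \<Rightarrow> 'n"
  proof -
    have "(\<Sum>u\<in>G. F (\<phi> u (P u m))) = (\<Sum>u\<in>G. if u = w then F (\<phi> u (P u m)) else 0)"
    proof (rule sum.cong[OF refl])
      fix u assume "u \<in> G"
      then have "u \<in> H0" using G(2) by blast
      then show "F (\<phi> u (P u m)) = (if u = w then F (\<phi> u (P u m)) else 0)" by (rule F)
    qed
    also have "\<dots> = F (\<phi> w (P w m))" using G by simp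
    finally show ?thesis .
  qed
  show ?thesis
  proof (intro exI conjI ballI)
    fix v x assume "v \<in> H0" "x \<in> P v ` M"
    then show "f x = \<phi> v x" by (rule fimg)
  next
    show "Lmodule_hom scM scN H0 H1 I J M P A As N Q B Bs f"
      unfolding Lmodule_hom_def
    proof (intro conjI ballI)
      show "lin_on scM scN M N f" unfolding lin_on_def
      proof (intro conjI ballI allI)
        show "f ` M \<subseteq> N" using fN by blast
      next
        fix x y assume x: "x \<in> M" and y: "y \<in> M"
        let ?G = "M.supp x \<union> M.supp y"
        have G: "finite ?G" "?G \<subseteq> H0" using finsupp[OF x] finsupp[OF y] M.supp_H0 by auto
        have "f (x + y) = (\<Sum>v\<in>?G. \<phi> v (P v (x + y)))"
          using M.supp_add[OF x y] G by (intro fG[OF M.addM[OF x y]]) auto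
        also have "\<dots> = (\<Sum>v\<in>?G. \<phi> v (P v x) + \<phi> v (P v y))"
        proof (rule sum.cong[OF refl])
          fix v assume "v \<in> ?G"
          then have v: "v \<in> H0" using G by blast
          show "\<phi> v (P v (x + y)) = \<phi> v (P v x) + \<phi> v (P v y)"
            using M.P_add[OF v x y] \<phi>add[OF v Pimg[OF x] Pimg[OF y]] by simp
        qed
        also have "\<dots> = f x + f y"
          using G fG[OF x G(1)] fG[OF y G(1)] by (simp add: sum.distrib)
        finally show "f (x + y) = f x + f y" .
      next
        fix c x assume x: "x \<in> M"
        have "f (scM c x) = (\<Sum>v\<in>M.supp x. \<phi> v (P v (scM c x)))"
          using M.supp_sc[OF x] finsupp[OF x] M.supp_H0 by (intro fG[OF M.scM[OF x]]) auto
        also have "\<dots> = (\<Sum>v\<in>M.supp x. scN c (\<phi> v (P v x)))"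
        proof (rule sum.cong[OF refl])
          fix v assume "v \<in> M.supp x"
          then have v: "v \<in> H0" using M.supp_H0 by blast
          show "\<phi> v (P v (scM c x)) = scN c (\<phi> v (P v x))"
            using M.P_sc[OF v x] \<phi>sc[OF v Pimg[OF x]] by simp
        qed
        also have "\<dots> = scN c (f x)" unfolding f_def by (rule N.sc_sum[symmetric])
        finally show "f (scM c x) = scN c (f x)" .
      qed
    next
      fix v m assume v: "v \<in> H0" and m: "m \<in> M"
      let ?G = "insert v (M.supp m)"
      have G: "finite ?G" "?G \<subseteq> H0" using finsupp[OF m] M.supp_H0 v by auto
      have "Q v (f m) = Q v (\<Sum>u\<in>?G. \<phi> u (P u m))" using fG[OF m G subset_insertI] by simp
      also have "\<dots> = (\<Sum>u\<in>?G. Q v (\<phi> u (P u m)))" by (rule N.P_sum[OF v fmem[OF m G(2)]])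
      also have "\<dots> = Q v (\<phi> v (P v m))"
      proof (rule fdelta[OF m G])
        show "v \<in> ?G" by simp
        fix u assume u: "u \<in> H0"
        show "Q v (\<phi> u (P u m)) = (if u = v then Q v (\<phi> u (P u m)) else 0)"
          using N.PP_img[OF u v \<phi>mem[OF u Pimg[OF m]]] by (cases "u = v") simp_all
      qed
      also have "\<dots> = \<phi> v (P v m)" using N.idem[OF v \<phi>mem[OF v Pimg[OF m]]] .
      also have "\<dots> = f (P v m)" using fimg[OF v Pimg[OF m]] by simp
      finally show "f (P v m) = Q v (f m)" by simp
    next
      fix h i j m assume h: "h \<in> H1" and i: "i \<in> I h" and j: "j \<in> J h" and m: "m \<in> M"
      have si: "s h i \<in> H0" and rj: "r h j \<in> H0" using M.sH0[OF h i] M.rH0[OF h j] .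
      show "f (A h i j m) = B h i j (f m)"
      proof -
        let ?G = "insert (s h i) (M.supp m)"
        have G: "finite ?G" "?G \<subseteq> H0" using finsupp[OF m] M.supp_H0 si by auto
        have "f (A h i j m) = \<phi> (r h j) (A h i j m)" by (rule fimg[OF rj M.A_img'[OF h i j m]])
        also have "\<dots> = \<phi> (r h j) (A h i j (P (s h i) m))" using M.AP[OF h i j m] by simp
        also have "\<dots> = B h i j (\<phi> (s h i) (P (s h i) m))" by (rule \<phi>A[OF h i j Pimg[OF m]])
        also have "\<dots> = (\<Sum>u\<in>?G. B h i j (\<phi> u (P u m)))"
        proof (rule fdelta[OF m G, symmetric])
          show "s h i \<in> ?G" by simp
          fix u assume u: "u \<in> H0"
          show "B h i j (\<phi> u (P u m)) = (if u = s h i then B h i j (\<phi> u (P u m)) else 0)"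
            by (rule N.A_delta[OF h i j u \<phi>mem[OF u Pimg[OF m]]])
        qed
        also have "\<dots> = B h i j (\<Sum>u\<in>?G. \<phi> u (P u m))" by (rule N.A_sum[OF h i j fmem[OF m G(2)], symmetric])
        also have "\<dots> = B h i j (f m)" using fG[OF m G subset_insertI] by simp
        finally show ?thesis .
      qed
      have key: "\<phi> (s h i) (As h i j y) = Bs h i j (\<phi> (r h j) y)" if y: "y \<in> P (r h j) ` M" for y
      proof -
        have yM: "y \<in> M" using M.img_M[OF rj y] .
        define z where "z k = \<phi> (s h k) (As h k j y)" for k
        have Asimg: "As h k j y \<in> P (s h k) ` M" if k: "k \<in> I h" for k by (rule M.As_img'[OF h k j yM])
        have zmem: "z k \<in> Q (s h k) ` N" if k: "k \<in> I h" for k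
          unfolding z_def by (rule \<phi>mem[OF M.sH0[OF h k] Asimg[OF k]])
        have zN: "z k \<in> N" if k: "k \<in> I h" for k by (rule N.img_M[OF M.sH0[OF h k] zmem[OF k]])
        have sumB: "(\<Sum>k\<in>I h. B h k l (z k)) = (if j = l then \<phi> (r h j) y else 0)" if l: "l \<in> J h" for l
        proof -
          have rl: "r h l \<in> H0" by (rule M.rH0[OF h l])
          have "(\<Sum>k\<in>I h. B h k l (z k)) = (\<Sum>k\<in>I h. \<phi> (r h l) (A h k l (As h k j y)))"
            unfolding z_def using \<phi>A[OF h _ l Asimg] by simp
          also have "\<dots> = \<phi> (r h l) (\<Sum>k\<in>I h. A h k l (As h k j y))"
            by (rule lin_on_sum[OF \<phi>lin[OF rl] M.subsp_img[OF rl], symmetric])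
               (use M.A_img[OF h _ l Asimg] in blast)
          also have "\<dots> = \<phi> (r h l) (if j = l then P (r h j) y else 0)"
            using M.sumAAs[OF h j l yM] by simp
          also have "\<dots> = (if j = l then \<phi> (r h j) y else 0)"
            using M.idem[OF rj y] \<phi>0[OF rl] by (cases "j = l") simp_all
          finally show ?thesis .
        qed
        have "\<phi> (s h i) (As h i j y) = z i" unfolding z_def ..
        also have "\<dots> = Q (s h i) (z i)" using N.idem[OF si zmem[OF i]] by simp
        also have "\<dots> = (\<Sum>k\<in>I h. if k = i then Q (s h k) (z k) else 0)"
          using i M.finI[OF h] by simp
        also have "\<dots> = (\<Sum>k\<in>I h. \<Sum>l\<in>J h. Bs h i l (B h k l (z k)))"
          by (rule sum.cong[OF refl], rule N.sumAsA[OF h _ i zN, symmetric], assumption+)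
        also have "\<dots> = (\<Sum>l\<in>J h. \<Sum>k\<in>I h. Bs h i l (B h k l (z k)))" by (rule sum.swap)
        also have "\<dots> = (\<Sum>l\<in>J h. Bs h i l (\<Sum>k\<in>I h. B h k l (z k)))"
          by (rule sum.cong[OF refl], rule N.As_sum[OF h i, symmetric], assumption)
             (use N.A_M[OF h _ _ zN] in blast)
        also have "\<dots> = (\<Sum>l\<in>J h. if l = j then Bs h i j (\<phi> (r h j) y) else 0)"
          by (rule sum.cong[OF refl]) (simp add: sumB N.As_0[OF h i])
        also have "\<dots> = Bs h i j (\<phi> (r h j) y)" using j M.finJ[OF h] by simp
        finally show ?thesis .
      qed
      show "f (As h i j m) = Bs h i j (f m)"
      proof -
        let ?G = "insert (r h j) (M.supp m)"
        have G: "finite ?G" "?G \<subseteq> H0" using finsupp[OF m] M.supp_H0 rj by auto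
        have "f (As h i j m) = \<phi> (s h i) (As h i j m)" by (rule fimg[OF si M.As_img'[OF h i j m]])
        also have "\<dots> = \<phi> (s h i) (As h i j (P (r h j) m))" using M.AsP[OF h i j m] by simp
        also have "\<dots> = Bs h i j (\<phi> (r h j) (P (r h j) m))" by (rule key[OF Pimg[OF m]])
        also have "\<dots> = (\<Sum>u\<in>?G. Bs h i j (\<phi> u (P u m)))"
        proof (rule fdelta[OF m G, symmetric])
          show "r h j \<in> ?G" by simp
          fix u assume u: "u \<in> H0"
          show "Bs h i j (\<phi> u (P u m)) = (if u = r h j then Bs h i j (\<phi> u (P u m)) else 0)"
            by (rule N.As_delta[OF h i j u \<phi>mem[OF u Pimg[OF m]]])
        qed
        also have "\<dots> = Bs h i j (\<Sum>u\<in>?G. \<phi> u (P u m))" by (rule N.As_sum[OF h i j fmem[OF m G(2)], symmetric])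
        also have "\<dots> = Bs h i j (f m)" using fG[OF m G subset_insertI] by simp
        finally show ?thesis .
      qed
    qed
  qed
qed


locale qrep =
  fixes scV :: "'k::field \<Rightarrow> 'b::ab_group_add \<Rightarrow> 'b"
    and H0 :: "'v set" and H1 :: "'h set" and I :: "'h \<Rightarrow> 'i set" and J :: "'h \<Rightarrow> 'j set"
    and s :: "'h \<Rightarrow> 'i \<Rightarrow> 'v" and r :: "'h \<Rightarrow> 'j \<Rightarrow> 'v"
    and V R
  assumes qr: "quiver_rep scV H0 H1 I J s r V R"
    and cH: "condH H1 I J s r V R"
    and reg: "regular_hypergraph H0 H1 I J s r"
begin

lemma vsV: "Vector_Spaces.vector_space scV"
  and subV: "v \<in> H0 \<Longrightarrow> subsp scV (V v)"
  and R_lin: "h \<in> H1 \<Longrightarrow> i \<in> I h \<Longrightarrow> j \<in> J h \<Longrightarrow> lin_on scV scV (V (s h i)) (V (r h j)) (R h i j)"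
  using qr unfolding quiver_rep_def by simp_all

lemma finI: "h \<in> H1 \<Longrightarrow> finite (I h)" and finJ: "h \<in> H1 \<Longrightarrow> finite (J h)"
  and sH0: "h \<in> H1 \<Longrightarrow> i \<in> I h \<Longrightarrow> s h i \<in> H0" and rH0: "h \<in> H1 \<Longrightarrow> j \<in> J h \<Longrightarrow> r h j \<in> H0"
  using reg unfolding regular_hypergraph_def by blast+

lemma zeroV: "v \<in> H0 \<Longrightarrow> 0 \<in> V v"
  and addV: "v \<in> H0 \<Longrightarrow> x \<in> V v \<Longrightarrow> y \<in> V v \<Longrightarrow> x + y \<in> V v"
  and scVV: "v \<in> H0 \<Longrightarrow> x \<in> V v \<Longrightarrow> scV c x \<in> V v"
  using subV unfolding subsp_def by blast+

lemma sumV: "v \<in> H0 \<Longrightarrow> \<forall>k\<in>F. g k \<in> V v \<Longrightarrow> sum g F \<in> V v"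
  using subsp_sum[OF subV] by blast

lemma R_mem: "h \<in> H1 \<Longrightarrow> i \<in> I h \<Longrightarrow> j \<in> J h \<Longrightarrow> x \<in> V (s h i) \<Longrightarrow> R h i j x \<in> V (r h j)"
  and R_add: "h \<in> H1 \<Longrightarrow> i \<in> I h \<Longrightarrow> j \<in> J h \<Longrightarrow> x \<in> V (s h i) \<Longrightarrow> y \<in> V (s h i) \<Longrightarrow> R h i j (x + y) = R h i j x + R h i j y"
  and R_sc: "h \<in> H1 \<Longrightarrow> i \<in> I h \<Longrightarrow> j \<in> J h \<Longrightarrow> x \<in> V (s h i) \<Longrightarrow> R h i j (scV c x) = scV c (R h i j x)"
  using R_lin unfolding lin_on_def by blast+

lemma R_0: "h \<in> H1 \<Longrightarrow> i \<in> I h \<Longrightarrow> j \<in> J h \<Longrightarrow> R h i j 0 = 0"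
  using lin_on_zero[OF R_lin zeroV[OF sH0]] by blast

lemma R_sum: "h \<in> H1 \<Longrightarrow> i \<in> I h \<Longrightarrow> j \<in> J h \<Longrightarrow> \<forall>k\<in>F. g k \<in> V (s h i) \<Longrightarrow> R h i j (sum g F) = (\<Sum>k\<in>F. R h i j (g k))"
  using lin_on_sum[OF R_lin subV[OF sH0]] by blast

lemma scV_sum: "scV c (sum g F) = (\<Sum>x\<in>F. scV c (g x))"
proof -
  interpret vector_space scV by (rule vsV)
  show ?thesis by (rule scale_sum_right)
qed

lemma scV_zero: "scV c 0 = 0"
proof -
  interpret vector_space scV by (rule vsV)
  show ?thesis by (rule scale_zero_right)
qed

lemma scV_add: "scV c (x + y) = scV c x + scV c y"
proof -
  interpret vector_space scV by (rule vsV)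
  show ?thesis by (rule scale_right_distrib)
qed

definition T where "T h x = restrict (\<lambda>j. \<Sum>i\<in>I h. R h i j (x i)) (J h)"
definition XX where "XX h = PiE (I h) (\<lambda>i. V (s h i))"
definition YY where "YY h = PiE (J h) (\<lambda>j. V (r h j))"
definition Tinv where "Tinv h = the_inv_into (XX h) (T h)"

lemma T_bij: "h \<in> H1 \<Longrightarrow> bij_betw (T h) (XX h) (YY h)"
  using cH unfolding condH_def T_def[abs_def] XX_def YY_def by blast

lemma T_app: "l \<in> J h \<Longrightarrow> T h x l = (\<Sum>i\<in>I h. R h i l (x i))"
  unfolding T_def by simp

lemma T_ext: "T h x \<in> extensional (J h)" unfolding T_def by simp

lemma Tinv_mem: "h \<in> H1 \<Longrightarrow> y \<in> YY h \<Longrightarrow> Tinv h y \<in> XX h"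
  unfolding Tinv_def using T_bij bij_betw_def by (metis the_inv_into_into order_refl)

lemma T_Tinv: "h \<in> H1 \<Longrightarrow> y \<in> YY h \<Longrightarrow> T h (Tinv h y) = y"
  unfolding Tinv_def using T_bij bij_betw_def by (metis f_the_inv_into_f)

lemma Tinv_eq: "h \<in> H1 \<Longrightarrow> x \<in> XX h \<Longrightarrow> T h x = y \<Longrightarrow> Tinv h y = x"
  unfolding Tinv_def using T_bij bij_betw_def by (metis the_inv_into_f_eq)

lemma T_inj: "h \<in> H1 \<Longrightarrow> x \<in> XX h \<Longrightarrow> x' \<in> XX h \<Longrightarrow> T h x = T h x' \<Longrightarrow> x = x'"
  using T_bij bij_betw_def by (metis inj_onD)

lemma XX_mem: "x \<in> XX h \<Longrightarrow> i \<in> I h \<Longrightarrow> x i \<in> V (s h i)"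
  unfolding XX_def by auto

lemma XX_restrict: "(\<And>i. i \<in> I h \<Longrightarrow> f i \<in> V (s h i)) \<Longrightarrow> restrict f (I h) \<in> XX h"
  unfolding XX_def by auto

lemma YY_restrict: "(\<And>j. j \<in> J h \<Longrightarrow> f j \<in> V (r h j)) \<Longrightarrow> restrict f (J h) \<in> YY h"
  unfolding YY_def by auto

lemma T_eqI: "(\<And>l. l \<in> J h \<Longrightarrow> T h x l = y l) \<Longrightarrow> y \<in> extensional (J h) \<Longrightarrow> T h x = y"
  using T_ext by (metis extensionalityI)

definition e where "e h j y = restrict (\<lambda>l. if l = j then y else 0) (J h)"

lemma e_mem: "h \<in> H1 \<Longrightarrow> j \<in> J h \<Longrightarrow> y \<in> V (r h j) \<Longrightarrow> e h j y \<in> YY h"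
  unfolding e_def using zeroV[OF rH0] by (intro YY_restrict) auto

definition Ainv where "Ainv h i j y = Tinv h (e h j y) i"

lemma Ainv_mem: "h \<in> H1 \<Longrightarrow> i \<in> I h \<Longrightarrow> j \<in> J h \<Longrightarrow> y \<in> V (r h j) \<Longrightarrow> Ainv h i j y \<in> V (s h i)"
  unfolding Ainv_def using Tinv_mem e_mem XX_mem by blast

lemma Ainv_add:
  assumes h: "h \<in> H1" and i: "i \<in> I h" and j: "j \<in> J h" and y1: "y1 \<in> V (r h j)" and y2: "y2 \<in> V (r h j)"
  shows "Ainv h i j (y1 + y2) = Ainv h i j y1 + Ainv h i j y2"
proof -
  define a where "a = Tinv h (e h j y1)"
  define b where "b = Tinv h (e h j y2)"
  have a: "a \<in> XX h" unfolding a_def using Tinv_mem[OF h e_mem[OF h j y1]] .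
  have b: "b \<in> XX h" unfolding b_def using Tinv_mem[OF h e_mem[OF h j y2]] .
  have Ta: "T h a = e h j y1" unfolding a_def using T_Tinv[OF h e_mem[OF h j y1]] .
  have Tb: "T h b = e h j y2" unfolding b_def using T_Tinv[OF h e_mem[OF h j y2]] .
  define c where "c = restrict (\<lambda>k. a k + b k) (I h)"
  have c: "c \<in> XX h" unfolding c_def
    using XX_mem[OF a] XX_mem[OF b] addV[OF sH0[OF h]] by (intro XX_restrict) blast
  have "T h c = e h j (y1 + y2)"
  proof (rule T_eqI)
    show "e h j (y1 + y2) \<in> extensional (J h)" unfolding e_def by simp
    fix l assume l: "l \<in> J h"
    have "T h c l = (\<Sum>k\<in>I h. R h k l (a k + b k))" using T_app[OF l] unfolding c_def by simp
    also have "\<dots> = (\<Sum>k\<in>I h. R h k l (a k) + R h k l (b k))"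
      using R_add[OF h _ l XX_mem[OF a] XX_mem[OF b]] by (intro sum.cong refl) blast
    also have "\<dots> = T h a l + T h b l" using T_app[OF l] by (simp add: sum.distrib)
    also have "\<dots> = e h j (y1 + y2) l" using Ta Tb l unfolding e_def by simp
    finally show "T h c l = e h j (y1 + y2) l" .
  qed
  then have "Tinv h (e h j (y1 + y2)) = c" by (rule Tinv_eq[OF h c])
  then show ?thesis unfolding Ainv_def using i unfolding c_def a_def b_def by simp
qed

lemma Ainv_sc:
  assumes h: "h \<in> H1" and i: "i \<in> I h" and j: "j \<in> J h" and y1: "y1 \<in> V (r h j)"
  shows "Ainv h i j (scV c y1) = scV c (Ainv h i j y1)"
proof -
  define a where "a = Tinv h (e h j y1)"
  have a: "a \<in> XX h" unfolding a_def using Tinv_mem[OF h e_mem[OF h j y1]] .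
  have Ta: "T h a = e h j y1" unfolding a_def using T_Tinv[OF h e_mem[OF h j y1]] .
  define d where "d = restrict (\<lambda>k. scV c (a k)) (I h)"
  have d: "d \<in> XX h" unfolding d_def
    using XX_mem[OF a] scVV[OF sH0[OF h]] by (intro XX_restrict) blast
  have "T h d = e h j (scV c y1)"
  proof (rule T_eqI)
    show "e h j (scV c y1) \<in> extensional (J h)" unfolding e_def by simp
    fix l assume l: "l \<in> J h"
    have "T h d l = (\<Sum>k\<in>I h. R h k l (scV c (a k)))" using T_app[OF l] unfolding d_def by simp
    also have "\<dots> = (\<Sum>k\<in>I h. scV c (R h k l (a k)))"
      using R_sc[OF h _ l XX_mem[OF a]] by (intro sum.cong refl) blast
    also have "\<dots> = scV c (T h a l)" using T_app[OF l] by (simp add: scV_sum)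
    also have "\<dots> = e h j (scV c y1) l" using Ta l scV_zero unfolding e_def by simp
    finally show "T h d l = e h j (scV c y1) l" .
  qed
  then have "Tinv h (e h j (scV c y1)) = d" by (rule Tinv_eq[OF h d])
  then show ?thesis unfolding Ainv_def using i unfolding d_def a_def by simp
qed

lemma Ainv_0: "h \<in> H1 \<Longrightarrow> i \<in> I h \<Longrightarrow> j \<in> J h \<Longrightarrow> Ainv h i j 0 = 0"
  using Ainv_add[of h i j 0 0] zeroV[OF rH0] by simp

lemma sum_Ainv_R:
  assumes h: "h \<in> H1" and i: "i \<in> I h" and k: "k \<in> I h" and x: "x \<in> V (s h i)"
  shows "(\<Sum>j\<in>J h. Ainv h k j (R h i j x)) = (if k = i then x else 0)"
proof -
  define a where "a j = Tinv h (e h j (R h i j x))" for j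
  have a: "a j \<in> XX h" if "j \<in> J h" for j
    unfolding a_def using Tinv_mem[OF h e_mem[OF h that R_mem[OF h i that x]]] .
  have Ta: "T h (a j) = e h j (R h i j x)" if "j \<in> J h" for j
    unfolding a_def using T_Tinv[OF h e_mem[OF h that R_mem[OF h i that x]]] .
  define c where "c = restrict (\<lambda>k. \<Sum>j\<in>J h. a j k) (I h)"
  define d where "d = restrict (\<lambda>k. if k = i then x else 0) (I h)"
  have c: "c \<in> XX h" unfolding c_def
  proof (rule XX_restrict)
    fix k assume k: "k \<in> I h"
    show "(\<Sum>j\<in>J h. a j k) \<in> V (s h k)"
      using XX_mem[OF a k] by (intro sumV[OF sH0[OF h k]]) blast
  qed
  have d: "d \<in> XX h" unfolding d_def using x zeroV[OF sH0[OF h]] by (intro XX_restrict) auto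
  have "T h c = T h d"
  proof (rule T_eqI)
    show "T h d \<in> extensional (J h)" by (rule T_ext)
    fix l assume l: "l \<in> J h"
    have "T h c l = (\<Sum>k\<in>I h. R h k l (\<Sum>j\<in>J h. a j k))" using T_app[OF l] unfolding c_def by simp
    also have "\<dots> = (\<Sum>k\<in>I h. \<Sum>j\<in>J h. R h k l (a j k))"
      by (rule sum.cong[OF refl], rule R_sum[OF h _ l], assumption) (use XX_mem[OF a] in blast)
    also have "\<dots> = (\<Sum>j\<in>J h. \<Sum>k\<in>I h. R h k l (a j k))" by (rule sum.swap)
    also have "\<dots> = (\<Sum>j\<in>J h. T h (a j) l)" using T_app[OF l] by simp
    also have "\<dots> = (\<Sum>j\<in>J h. if l = j then R h i j x else 0)"
      using Ta l unfolding e_def by (intro sum.cong refl) simp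
    also have "\<dots> = R h i l x" using l finJ[OF h] by simp
    also have "\<dots> = (\<Sum>k\<in>I h. R h k l (if k = i then x else 0))"
    proof -
      have "(\<Sum>k\<in>I h. R h k l (if k = i then x else 0)) = (\<Sum>k\<in>I h. if k = i then R h k l x else 0)"
        using R_0[OF h _ l] by (intro sum.cong refl) simp
      also have "\<dots> = R h i l x" using i finI[OF h] by simp
      finally show ?thesis by simp
    qed
    also have "\<dots> = T h d l" using T_app[OF l] unfolding d_def by simp
    finally show "T h c l = T h d l" .
  qed
  then have "c = d" using T_inj[OF h c d] by blast
  then have "c k = d k" by simp
  then show ?thesis using k unfolding c_def d_def a_def Ainv_def by simp
qed

lemma sum_R_Ainv:
  assumes h: "h \<in> H1" and j: "j \<in> J h" and l: "l \<in> J h" and y: "y \<in> V (r h j)"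
  shows "(\<Sum>i\<in>I h. R h i l (Ainv h i j y)) = (if j = l then y else 0)"
proof -
  have "(\<Sum>i\<in>I h. R h i l (Ainv h i j y)) = T h (Tinv h (e h j y)) l"
    using T_app[OF l] unfolding Ainv_def by simp
  also have "\<dots> = e h j y l" using T_Tinv[OF h e_mem[OF h j y]] by simp
  also have "\<dots> = (if j = l then y else 0)" using l unfolding e_def by auto
  finally show ?thesis .
qed


definition MM :: "('v \<Rightarrow> 'b) set" where
  "MM = {x. (\<forall>v\<in>H0. x v \<in> V v) \<and> (\<forall>v. v \<notin> H0 \<longrightarrow> x v = 0) \<and> finite {v. x v \<noteq> 0}}"
definition PP :: "'v \<Rightarrow> ('v \<Rightarrow> 'b) \<Rightarrow> ('v \<Rightarrow> 'b)" where
  "PP v x = (\<lambda>w. if w = v then x v else 0)"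
definition AA :: "'h \<Rightarrow> 'i \<Rightarrow> 'j \<Rightarrow> ('v \<Rightarrow> 'b) \<Rightarrow> ('v \<Rightarrow> 'b)" where
  "AA h i j x = (\<lambda>w. if w = r h j then R h i j (x (s h i)) else 0)"
definition AAs :: "'h \<Rightarrow> 'i \<Rightarrow> 'j \<Rightarrow> ('v \<Rightarrow> 'b) \<Rightarrow> ('v \<Rightarrow> 'b)" where
  "AAs h i j x = (\<lambda>w. if w = s h i then Ainv h i j (x (r h j)) else 0)"

lemma MM_iff: "x \<in> MM \<longleftrightarrow> (\<forall>v\<in>H0. x v \<in> V v) \<and> (\<forall>v. v \<notin> H0 \<longrightarrow> x v = 0) \<and> finite {v. x v \<noteq> 0}"
  unfolding MM_def by simp

lemma MM_single: "v \<in> H0 \<Longrightarrow> y \<in> V v \<Longrightarrow> (\<lambda>w. if w = v then y else 0) \<in> MM"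
proof -
  assume v: "v \<in> H0" and y: "y \<in> V v"
  have "{w. (if w = v then y else 0) \<noteq> 0} \<subseteq> {v}" by auto
  then have "finite {w. (if w = v then y else 0) \<noteq> 0}" using finite_subset by blast
  then show ?thesis unfolding MM_iff using v y zeroV by auto
qed

lemma MM_V: "x \<in> MM \<Longrightarrow> v \<in> H0 \<Longrightarrow> x v \<in> V v" unfolding MM_iff by blast

lemma vs_fun: "Vector_Spaces.vector_space (\<lambda>c (x :: 'v \<Rightarrow> 'b) w. scV c (x w))"
proof -
  interpret V: vector_space scV by (rule vsV)
  show ?thesis by unfold_locales (simp_all add: fun_eq_iff V.scale_right_distrib V.scale_left_distrib)
qed

lemma subsp_MM: "subsp (\<lambda>c (x :: 'v \<Rightarrow> 'b) w. scV c (x w)) MM"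
  unfolding subsp_def
proof (intro conjI ballI allI)
  show "0 \<in> MM" unfolding MM_iff using zeroV by simp
next
  fix x y assume x: "x \<in> MM" and y: "y \<in> MM"
  have "{v. x v + y v \<noteq> 0} \<subseteq> {v. x v \<noteq> 0} \<union> {v. y v \<noteq> 0}" by auto
  then have "finite {v. x v + y v \<noteq> 0}" using x y unfolding MM_iff using finite_subset by blast
  then show "x + y \<in> MM" using x y addV unfolding MM_iff by simp
next
  fix c x assume x: "x \<in> MM"
  have "{v. scV c (x v) \<noteq> 0} \<subseteq> {v. x v \<noteq> 0}" using scV_zero by auto
  then have "finite {v. scV c (x v) \<noteq> 0}" using x unfolding MM_iff using finite_subset by blast
  then show "(\<lambda>w. scV c (x w)) \<in> MM" using x scVV scV_zero unfolding MM_iff by simp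
qed

lemma PP_MM: "v \<in> H0 \<Longrightarrow> x \<in> MM \<Longrightarrow> PP v x \<in> MM"
  unfolding PP_def by (rule MM_single) (auto simp: MM_iff)

lemma AA_MM: "h \<in> H1 \<Longrightarrow> i \<in> I h \<Longrightarrow> j \<in> J h \<Longrightarrow> x \<in> MM \<Longrightarrow> AA h i j x \<in> MM"
proof -
  assume a: "h \<in> H1" "i \<in> I h" "j \<in> J h" "x \<in> MM"
  show ?thesis unfolding AA_def
    by (rule MM_single[OF rH0[OF a(1,3)] R_mem[OF a(1-3) MM_V[OF a(4) sH0[OF a(1,2)]]]])
qed

lemma AAs_MM: "h \<in> H1 \<Longrightarrow> i \<in> I h \<Longrightarrow> j \<in> J h \<Longrightarrow> x \<in> MM \<Longrightarrow> AAs h i j x \<in> MM"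
proof -
  assume a: "h \<in> H1" "i \<in> I h" "j \<in> J h" "x \<in> MM"
  show ?thesis unfolding AAs_def
    by (rule MM_single[OF sH0[OF a(1,2)] Ainv_mem[OF a(1-3) MM_V[OF a(4) rH0[OF a(1,3)]]]])
qed

lemma umodule: "unital_module (\<lambda>c (x :: 'v \<Rightarrow> 'b) w. scV c (x w)) H0 H1 I J s r MM PP AA AAs"
  unfolding unital_module_def
proof (intro conjI ballI vs_fun subsp_MM)
  fix v assume v: "v \<in> H0"
  show "lin_on (\<lambda>c x w. scV c (x w)) (\<lambda>c x w. scV c (x w)) MM MM (PP v)"
    unfolding lin_on_def
  proof (intro conjI ballI allI)
    show "PP v ` MM \<subseteq> MM" using PP_MM[OF v] by blast
    fix x y :: "'v \<Rightarrow> 'b"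
    show "PP v (x + y) = PP v x + PP v y" by (simp add: PP_def fun_eq_iff)
  next
    fix c and x :: "'v \<Rightarrow> 'b"
    show "PP v (\<lambda>w. scV c (x w)) = (\<lambda>w. scV c (PP v x w))" by (simp add: PP_def fun_eq_iff scV_zero)
  qed
next
  fix h i j assume h: "h \<in> H1" and i: "i \<in> I h" and j: "j \<in> J h"
  show "lin_on (\<lambda>c x w. scV c (x w)) (\<lambda>c x w. scV c (x w)) MM MM (AA h i j)"
    unfolding lin_on_def
  proof (intro conjI ballI allI)
    show "AA h i j ` MM \<subseteq> MM" using AA_MM[OF h i j] by blast
    fix x y assume x: "x \<in> MM" and y: "y \<in> MM"
    show "AA h i j (x + y) = AA h i j x + AA h i j y"
      using R_add[OF h i j MM_V[OF x sH0[OF h i]] MM_V[OF y sH0[OF h i]]]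
      unfolding AA_def by (simp add: fun_eq_iff)
  next
    fix c x assume x: "x \<in> MM"
    show "AA h i j (\<lambda>w. scV c (x w)) = (\<lambda>w. scV c (AA h i j x w))"
      using R_sc[OF h i j MM_V[OF x sH0[OF h i]]] scV_zero
      unfolding AA_def by (simp add: fun_eq_iff)
  qed
  show "lin_on (\<lambda>c x w. scV c (x w)) (\<lambda>c x w. scV c (x w)) MM MM (AAs h i j)"
    unfolding lin_on_def
  proof (intro conjI ballI allI)
    show "AAs h i j ` MM \<subseteq> MM" using AAs_MM[OF h i j] by blast
    fix x y assume x: "x \<in> MM" and y: "y \<in> MM"
    show "AAs h i j (x + y) = AAs h i j x + AAs h i j y"
      using Ainv_add[OF h i j MM_V[OF x rH0[OF h j]] MM_V[OF y rH0[OF h j]]]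
      unfolding AAs_def by (simp add: fun_eq_iff)
  next
    fix c x assume x: "x \<in> MM"
    show "AAs h i j (\<lambda>w. scV c (x w)) = (\<lambda>w. scV c (AAs h i j x w))"
      using Ainv_sc[OF h i j MM_V[OF x rH0[OF h j]]] scV_zero
      unfolding AAs_def by (simp add: fun_eq_iff)
  qed
next
  fix u v m assume "u \<in> H0" "v \<in> H0" "m \<in> MM"
  show "PP v (PP u m) = (if u = v then PP u m else 0)"
    by (cases "u = v") (simp_all add: PP_def fun_eq_iff)
next
  fix h i j m assume h: "h \<in> H1" and i: "i \<in> I h" and j: "j \<in> J h" and m: "m \<in> MM"
  show "AA h i j (PP (s h i) m) = AA h i j m" unfolding AA_def PP_def by simp
  show "PP (r h j) (AA h i j m) = AA h i j m" by (simp add: AA_def PP_def fun_eq_iff)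
  show "AAs h i j (PP (r h j) m) = AAs h i j m" unfolding AAs_def PP_def by simp
  show "PP (s h i) (AAs h i j m) = AAs h i j m" by (simp add: AAs_def PP_def fun_eq_iff)
next
  fix h i k m assume h: "h \<in> H1" and i: "i \<in> I h" and k: "k \<in> I h" and m: "m \<in> MM"
  have mi: "m (s h i) \<in> V (s h i)" using MM_V[OF m sH0[OF h i]] .
  show "(\<Sum>j\<in>J h. AAs h k j (AA h i j m)) = (if i = k then PP (s h i) m else 0)"
  proof (rule ext)
    fix w
    have "(\<Sum>j\<in>J h. AAs h k j (AA h i j m)) w = (\<Sum>j\<in>J h. AAs h k j (AA h i j m) w)"
      by (rule sum_fun_app)
    also have "\<dots> = (\<Sum>j\<in>J h. if w = s h k then Ainv h k j (R h i j (m (s h i))) else 0)"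
      by (intro sum.cong refl) (simp add: AAs_def AA_def)
    also have "\<dots> = (if w = s h k then (\<Sum>j\<in>J h. Ainv h k j (R h i j (m (s h i)))) else 0)"
      by simp
    also have "\<dots> = (if i = k then PP (s h i) m else 0) w"
      using sum_Ainv_R[OF h i k mi] unfolding PP_def by auto
    finally show "(\<Sum>j\<in>J h. AAs h k j (AA h i j m)) w = (if i = k then PP (s h i) m else 0) w" .
  qed
next
  fix h j l m assume h: "h \<in> H1" and j: "j \<in> J h" and l: "l \<in> J h" and m: "m \<in> MM"
  have mj: "m (r h j) \<in> V (r h j)" using MM_V[OF m rH0[OF h j]] .
  show "(\<Sum>i\<in>I h. AA h i l (AAs h i j m)) = (if j = l then PP (r h j) m else 0)"
  proof (rule ext)
    fix w
    have "(\<Sum>i\<in>I h. AA h i l (AAs h i j m)) w = (\<Sum>i\<in>I h. AA h i l (AAs h i j m) w)"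
      by (rule sum_fun_app)
    also have "\<dots> = (\<Sum>i\<in>I h. if w = r h l then R h i l (Ainv h i j (m (r h j))) else 0)"
      by (intro sum.cong refl) (simp add: AAs_def AA_def)
    also have "\<dots> = (if w = r h l then (\<Sum>i\<in>I h. R h i l (Ainv h i j (m (r h j)))) else 0)"
      by simp
    also have "\<dots> = (if j = l then PP (r h j) m else 0) w"
      using sum_R_Ainv[OF h j l mj] unfolding PP_def by auto
    finally show "(\<Sum>i\<in>I h. AA h i l (AAs h i j m)) w = (if j = l then PP (r h j) m else 0) w" .
  qed
next
  fix m assume m: "m \<in> MM"
  let ?F = "{v. m v \<noteq> 0}"
  have F: "finite ?F" "?F \<subseteq> H0" using m unfolding MM_iff by auto
  have "m = (\<Sum>v\<in>?F. PP v m)"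
  proof (rule ext)
    fix w
    have "(\<Sum>v\<in>?F. PP v m) w = (\<Sum>v\<in>?F. PP v m w)" by (rule sum_fun_app)
    also have "\<dots> = (\<Sum>v\<in>?F. if w = v then m v else 0)" unfolding PP_def by simp
    also have "\<dots> = m w" using F(1) by (simp add: sum.delta)
    finally show "m w = (\<Sum>v\<in>?F. PP v m) w" by simp
  qed
  note eq = this
  show "\<exists>F g. finite F \<and> F \<subseteq> H0 \<and> (\<forall>v\<in>F. g v \<in> MM) \<and> m = (\<Sum>v\<in>F. PP v (g v))"
  proof (rule exI[where x="?F"], rule exI[where x="\<lambda>_. m"], intro conjI)
    show "finite ?F" by (rule F(1))
    show "?F \<subseteq> H0" by (rule F(2))
    show "\<forall>v\<in>?F. m \<in> MM" using m by blast
    show "m = (\<Sum>v\<in>?F. PP v m)" by (rule eq)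
  qed
qed

lemma PP_img_iff: "v \<in> H0 \<Longrightarrow> x \<in> PP v ` MM \<longleftrightarrow> x v \<in> V v \<and> (\<forall>w. w \<noteq> v \<longrightarrow> x w = 0)"
proof
  assume v: "v \<in> H0" and "x \<in> PP v ` MM"
  then obtain m where m: "m \<in> MM" "x = PP v m" by blast
  then show "x v \<in> V v \<and> (\<forall>w. w \<noteq> v \<longrightarrow> x w = 0)" using MM_V[OF m(1) v] unfolding PP_def by simp
next
  assume v: "v \<in> H0" and x: "x v \<in> V v \<and> (\<forall>w. w \<noteq> v \<longrightarrow> x w = 0)"
  have "x = (\<lambda>w. if w = v then x v else 0)" using x by (auto simp: fun_eq_iff)
  moreover have "(\<lambda>w. if w = v then x v else 0) \<in> MM" using MM_single[OF v] x by blast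
  ultimately have "x \<in> MM" by simp
  moreover have "PP v x = x" using x unfolding PP_def by (auto simp: fun_eq_iff)
  ultimately show "x \<in> PP v ` MM" by (metis image_eqI)
qed

lemma iso: "reps_isomorphic (\<lambda>c (x :: 'v \<Rightarrow> 'b) w. scV c (x w)) scV H0 H1 I J s r
             (\<lambda>v. PP v ` MM) AA V R"
  unfolding reps_isomorphic_def
proof (intro exI conjI)
  let ?\<phi> = "\<lambda>v (x :: 'v \<Rightarrow> 'b). x v"
  let ?\<psi> = "\<lambda>v y. (\<lambda>w. if w = v then y else (0 :: 'b))"
  show "rep_morph (\<lambda>c (x :: 'v \<Rightarrow> 'b) w. scV c (x w)) scV H0 H1 I J s r (\<lambda>v. PP v ` MM) AA V R ?\<phi>"
    unfolding rep_morph_def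
  proof (intro conjI ballI)
    fix v assume v: "v \<in> H0"
    show "lin_on (\<lambda>c x w. scV c (x w)) scV (PP v ` MM) (V v) (?\<phi> v)"
      unfolding lin_on_def
    proof (intro conjI ballI allI)
      show "?\<phi> v ` PP v ` MM \<subseteq> V v"
      proof
        fix y assume "y \<in> ?\<phi> v ` PP v ` MM"
        then obtain x where x: "x \<in> PP v ` MM" and y: "y = x v" by blast
        show "y \<in> V v" using PP_img_iff[OF v] x y by blast
      qed
      fix x y :: "'v \<Rightarrow> 'b"
      show "?\<phi> v (x + y) = ?\<phi> v x + ?\<phi> v y" by simp
    next
      fix c and x :: "'v \<Rightarrow> 'b"
      show "?\<phi> v (\<lambda>w. scV c (x w)) = scV c (?\<phi> v x)" by simp
    qed
  next
    fix h i j x assume "h \<in> H1" "i \<in> I h" "j \<in> J h" "x \<in> PP (s h i) ` MM"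
    show "?\<phi> (r h j) (AA h i j x) = R h i j (?\<phi> (s h i) x)" unfolding AA_def by simp
  qed
  show "rep_morph scV (\<lambda>c (x :: 'v \<Rightarrow> 'b) w. scV c (x w)) H0 H1 I J s r V R (\<lambda>v. PP v ` MM) AA ?\<psi>"
    unfolding rep_morph_def
  proof (intro conjI ballI)
    fix v assume v: "v \<in> H0"
    show "lin_on scV (\<lambda>c x w. scV c (x w)) (V v) (PP v ` MM) (?\<psi> v)"
      unfolding lin_on_def
    proof (intro conjI ballI allI)
      show "?\<psi> v ` V v \<subseteq> PP v ` MM"
      proof
        fix z assume "z \<in> ?\<psi> v ` V v"
        then obtain y where y: "y \<in> V v" and z: "z = ?\<psi> v y" by blast
        have "z v \<in> V v \<and> (\<forall>w. w \<noteq> v \<longrightarrow> z w = 0)" using y z by simp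
        then show "z \<in> PP v ` MM" using PP_img_iff[OF v] by blast
      qed
      fix x y assume "x \<in> V v" "y \<in> V v"
      show "?\<psi> v (x + y) = ?\<psi> v x + ?\<psi> v y" by (simp add: fun_eq_iff)
    next
      fix c x assume "x \<in> V v"
      show "?\<psi> v (scV c x) = (\<lambda>w. scV c (?\<psi> v x w))" by (simp add: fun_eq_iff scV_zero)
    qed
  next
    fix h i j x assume "h \<in> H1" "i \<in> I h" "j \<in> J h" "x \<in> V (s h i)"
    show "?\<psi> (r h j) (R h i j x) = AA h i j (?\<psi> (s h i) x)" unfolding AA_def by simp
  qed
  show "\<forall>v\<in>H0. (\<forall>x\<in>PP v ` MM. ?\<psi> v (?\<phi> v x) = x) \<and> (\<forall>y\<in>V v. ?\<phi> v (?\<psi> v y) = y)"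
  proof (intro ballI conjI)
    fix v x assume v: "v \<in> H0" and x: "x \<in> PP v ` MM"
    have "x v \<in> V v \<and> (\<forall>w. w \<noteq> v \<longrightarrow> x w = 0)" using PP_img_iff[OF v] x by blast
    then show "?\<psi> v (?\<phi> v x) = x" by (simp add: fun_eq_iff)
  next
    fix v y assume "v \<in> H0" "y \<in> V v"
    show "?\<phi> v (?\<psi> v y) = y" by simp
  qed
qed

end

theorem mainTheorem13:
  fixes H0 :: "'v set" and H1 :: "'h set" and I :: "'h \<Rightarrow> 'i set" and J :: "'h \<Rightarrow> 'j set"
    and s :: "'h \<Rightarrow> 'i \<Rightarrow> 'v" and r :: "'h \<Rightarrow> 'j \<Rightarrow> 'v"
  assumes reg: "regular_hypergraph H0 H1 I J s r"
  shows
    \<comment> \<open>the functor M \<mapsto> rho_M lands in representations satisfying (H)\<close>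
    "(\<forall>(scM :: 'k::field \<Rightarrow> 'm::ab_group_add \<Rightarrow> 'm) M P A As.
        unital_module scM H0 H1 I J s r M P A As \<longrightarrow>
          quiver_rep scM H0 H1 I J s r (\<lambda>v. P v ` M) A \<and>
          condH H1 I J s r (\<lambda>v. P v ` M) A)
   \<and> \<comment> \<open>on morphisms: f \<mapsto> (f restricted to each M v) is a morphism of representations\<close>
     (\<forall>(scM :: 'k \<Rightarrow> 'm \<Rightarrow> 'm) M P A As (scN :: 'k \<Rightarrow> 'n::ab_group_add \<Rightarrow> 'n) N Q B Bs f.
        unital_module scM H0 H1 I J s r M P A As \<longrightarrow>
        unital_module scN H0 H1 I J s r N Q B Bs \<longrightarrow>
        Lmodule_hom scM scN H0 H1 I J M P A As N Q B Bs f \<longrightarrow>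
        rep_morph scM scN H0 H1 I J s r (\<lambda>v. P v ` M) A (\<lambda>v. Q v ` N) B (\<lambda>v. f))
   \<and> \<comment> \<open>faithful\<close>
     (\<forall>(scM :: 'k \<Rightarrow> 'm \<Rightarrow> 'm) M P A As (scN :: 'k \<Rightarrow> 'n \<Rightarrow> 'n) N Q B Bs f g.
        unital_module scM H0 H1 I J s r M P A As \<longrightarrow>
        unital_module scN H0 H1 I J s r N Q B Bs \<longrightarrow>
        Lmodule_hom scM scN H0 H1 I J M P A As N Q B Bs f \<longrightarrow>
        Lmodule_hom scM scN H0 H1 I J M P A As N Q B Bs g \<longrightarrow>
        (\<forall>v\<in>H0. \<forall>x\<in>P v ` M. f x = g x) \<longrightarrow> (\<forall>x\<in>M. f x = g x))
   \<and> \<comment> \<open>full\<close>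
     (\<forall>(scM :: 'k \<Rightarrow> 'm \<Rightarrow> 'm) M P A As (scN :: 'k \<Rightarrow> 'n \<Rightarrow> 'n) N Q B Bs \<phi>.
        unital_module scM H0 H1 I J s r M P A As \<longrightarrow>
        unital_module scN H0 H1 I J s r N Q B Bs \<longrightarrow>
        rep_morph scM scN H0 H1 I J s r (\<lambda>v. P v ` M) A (\<lambda>v. Q v ` N) B \<phi> \<longrightarrow>
        (\<exists>f. Lmodule_hom scM scN H0 H1 I J M P A As N Q B Bs f \<and>
             (\<forall>v\<in>H0. \<forall>x\<in>P v ` M. f x = \<phi> v x)))
   \<and> \<comment> \<open>essentially surjective onto representations satisfying (H)\<close>
     (\<forall>(scV :: 'k \<Rightarrow> 'b::ab_group_add \<Rightarrow> 'b) V R.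
        quiver_rep scV H0 H1 I J s r V R \<longrightarrow> condH H1 I J s r V R \<longrightarrow>
        (\<exists>M P A As.
           unital_module (\<lambda>c (x :: 'v \<Rightarrow> 'b) w. scV c (x w)) H0 H1 I J s r M P A As \<and>
           reps_isomorphic (\<lambda>c (x :: 'v \<Rightarrow> 'b) w. scV c (x w)) scV H0 H1 I J s r
             (\<lambda>v. P v ` M) A V R))"
proof (intro conjI)
  show "\<forall>(scM :: 'k::field \<Rightarrow> 'm::ab_group_add \<Rightarrow> 'm) M P A As.
        unital_module scM H0 H1 I J s r M P A As \<longrightarrow>
          quiver_rep scM H0 H1 I J s r (\<lambda>v. P v ` M) A \<and>
          condH H1 I J s r (\<lambda>v. P v ` M) A"
  proof (intro allI impI)
    fix scM :: "'k::field \<Rightarrow> 'm::ab_group_add \<Rightarrow> 'm" and M P A As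
    assume um: "unital_module scM H0 H1 I J s r M P A As"
    interpret umod scM H0 H1 I J s r M P A As using um reg by unfold_locales
    show "quiver_rep scM H0 H1 I J s r (\<lambda>v. P v ` M) A \<and> condH H1 I J s r (\<lambda>v. P v ` M) A"
      using quiv condH by blast
  qed
next
  show "\<forall>(scM :: 'k \<Rightarrow> 'm \<Rightarrow> 'm) M P A As (scN :: 'k \<Rightarrow> 'n::ab_group_add \<Rightarrow> 'n) N Q B Bs f.
        unital_module scM H0 H1 I J s r M P A As \<longrightarrow>
        unital_module scN H0 H1 I J s r N Q B Bs \<longrightarrow>
        Lmodule_hom scM scN H0 H1 I J M P A As N Q B Bs f \<longrightarrow>
        rep_morph scM scN H0 H1 I J s r (\<lambda>v. P v ` M) A (\<lambda>v. Q v ` N) B (\<lambda>v. f)"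
    using part2[OF reg] by blast
next
  show "\<forall>(scM :: 'k \<Rightarrow> 'm \<Rightarrow> 'm) M P A As (scN :: 'k \<Rightarrow> 'n \<Rightarrow> 'n) N Q B Bs f g.
        unital_module scM H0 H1 I J s r M P A As \<longrightarrow>
        unital_module scN H0 H1 I J s r N Q B Bs \<longrightarrow>
        Lmodule_hom scM scN H0 H1 I J M P A As N Q B Bs f \<longrightarrow>
        Lmodule_hom scM scN H0 H1 I J M P A As N Q B Bs g \<longrightarrow>
        (\<forall>v\<in>H0. \<forall>x\<in>P v ` M. f x = g x) \<longrightarrow> (\<forall>x\<in>M. f x = g x)"
  proof (intro allI impI)
    fix scM :: "'k \<Rightarrow> 'm \<Rightarrow> 'm" and M P A As and scN :: "'k \<Rightarrow> 'n \<Rightarrow> 'n" and N Q B Bs f g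
    assume "unital_module scM H0 H1 I J s r M P A As" "unital_module scN H0 H1 I J s r N Q B Bs"
      "Lmodule_hom scM scN H0 H1 I J M P A As N Q B Bs f" "Lmodule_hom scM scN H0 H1 I J M P A As N Q B Bs g"
      "\<forall>v\<in>H0. \<forall>x\<in>P v ` M. f x = g x"
    then show "\<forall>x\<in>M. f x = g x" by (rule part3[OF reg])
  qed
next
  show "\<forall>(scM :: 'k \<Rightarrow> 'm \<Rightarrow> 'm) M P A As (scN :: 'k \<Rightarrow> 'n \<Rightarrow> 'n) N Q B Bs \<phi>.
        unital_module scM H0 H1 I J s r M P A As \<longrightarrow>
        unital_module scN H0 H1 I J s r N Q B Bs \<longrightarrow>
        rep_morph scM scN H0 H1 I J s r (\<lambda>v. P v ` M) A (\<lambda>v. Q v ` N) B \<phi> \<longrightarrow>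
        (\<exists>f. Lmodule_hom scM scN H0 H1 I J M P A As N Q B Bs f \<and>
             (\<forall>v\<in>H0. \<forall>x\<in>P v ` M. f x = \<phi> v x))"
  proof (intro allI impI)
    fix scM :: "'k \<Rightarrow> 'm \<Rightarrow> 'm" and M P A As and scN :: "'k \<Rightarrow> 'n \<Rightarrow> 'n" and N Q B Bs \<phi>
    assume "unital_module scM H0 H1 I J s r M P A As" "unital_module scN H0 H1 I J s r N Q B Bs"
      "rep_morph scM scN H0 H1 I J s r (\<lambda>v. P v ` M) A (\<lambda>v. Q v ` N) B \<phi>"
    then show "\<exists>f. Lmodule_hom scM scN H0 H1 I J M P A As N Q B Bs f \<and>
             (\<forall>v\<in>H0. \<forall>x\<in>P v ` M. f x = \<phi> v x)" by (rule part4[OF reg])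
  qed
next
  show "\<forall>(scV :: 'k \<Rightarrow> 'b::ab_group_add \<Rightarrow> 'b) V R.
        quiver_rep scV H0 H1 I J s r V R \<longrightarrow> condH H1 I J s r V R \<longrightarrow>
        (\<exists>M P A As.
           unital_module (\<lambda>c (x :: 'v \<Rightarrow> 'b) w. scV c (x w)) H0 H1 I J s r M P A As \<and>
           reps_isomorphic (\<lambda>c (x :: 'v \<Rightarrow> 'b) w. scV c (x w)) scV H0 H1 I J s r
             (\<lambda>v. P v ` M) A V R)"
  proof (intro allI impI)
    fix scV :: "'k \<Rightarrow> 'b \<Rightarrow> 'b" and V R
    assume qr: "quiver_rep scV H0 H1 I J s r V R" and cH: "condH H1 I J s r V R"
    interpret qrep scV H0 H1 I J s r V R using qr cH reg by unfold_locales
    show "\<exists>M P A As.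
           unital_module (\<lambda>c (x :: 'v \<Rightarrow> 'b) w. scV c (x w)) H0 H1 I J s r M P A As \<and>
           reps_isomorphic (\<lambda>c (x :: 'v \<Rightarrow> 'b) w. scV c (x w)) scV H0 H1 I J s r
             (\<lambda>v. P v ` M) A V R"
      using umodule iso by blast
  qed
qed

end
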